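(* Let $\alpha$ be a composition and $n\ge1$. Then $$\{w(\alpha): w\in CRHW_n,\ w(\alpha)\neq0\}=\{\beta:\ \alpha<_c\beta \text{ and } \beta/\!\!/\alpha \text{ is an nc border strip with } n \text{ boxes}\}.$$
   Context: A composition is a finite sequence $\alpha=(\alpha_1,\dots,\alpha_k)$ of positive integers; $\ell(\alpha)=k$. Its diagram is the set of boxes $(i,j)$, $1\le i\le\ell(\alpha)$, $1\le j\le\alpha_i$, rows numbered top to bottom, columns left to right. For compositions $\gamma=(\gamma_1,\dots,\gamma_l)$, $\delta$ write $\gamma\lessdot_c\delta$ if $\delta=(1,\gamma_1,\dots,\gamma_l)$ or $\delta=(\gamma_1,\dots,\gamma_k+1,\dots,\gamma_l)$ for some $k$ with $\gamma_i\neq\gamma_k$ for all $i<k$; $<_c$ is the transitive closure. For $\gamma<_c\delta$, $\delta/\!\!/\gamma$ is the set of boxes of $\delta$ not in the inner shape, the inner shape being the boxes $(\ell(\delta)-\ell(\gamma)+i,j)$, $1\le i\le\ell(\gamma)$, $1\le j\le\gamma_i$. $\mathrm{supp}(\beta/\!\!/\alpha)$ is the set of columns containing a box of $\beta/\!\!/\alpha$; $\beta/\!\!/\alpha$ is an interval shape if this set is a set of consecutive integers. An interval shape is an nc border strip if (1) whenever $(i,1),(i,2)\in\beta/\!\!/\alpha$, the box $(i,1)$ is the bottommost box of column 1 of $\beta/\!\!/\alpha$, and (2) whenever $(i,j),(i,j+1)\in\beta/\!\!/\alpha$ with $j\ge2$, the box $(i,j)$ is the topmost box of column $j$ of $\beta/\!\!/\alpha$.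 Box-adding operators: $\mathfrak t_1(\alpha)=(1,\alpha_1,\dots,\alpha_k)$; for $i\ge2$, $\mathfrak t_i(\alpha)$ increases the leftmost part of $\alpha$ equal to $i-1$ by $1$, and is $0$ if there is no such part; $\mathfrak t_i(0)=0$. A word $w=\mathfrak t_{i_1}\cdots\mathfrak t_{i_n}$ acts by $w(\alpha)=\mathfrak t_{i_1}(\cdots\mathfrak t_{i_n}(\alpha))$. It is a reverse hookword if $i_1\le\cdots\le i_{k+1}>i_{k+2}>\cdots>i_n$ for some $0\le k\le n-1$, connected if $\{i_1,\dots,i_n\}$ is a set of consecutive integers; $CRHW_n$ is the set of connected reverse hookwords of length $n$. *)

theory Defs
  imports Main
begin

text \<open>Compositions are lists of positive naturals. Boxes are pairs (row, column), 1-based.\<close>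

definition is_composition :: "nat list \<Rightarrow> bool" where
  "is_composition \<alpha> \<longleftrightarrow> (\<forall>x\<in>set \<alpha>. 0 < x)"

text \<open>Cover relation gamma <.c delta (indices 0-based here).\<close>
definition comp_cover :: "nat list \<Rightarrow> nat list \<Rightarrow> bool" where
  "comp_cover \<gamma> \<delta> \<longleftrightarrow>
     \<delta> = 1 # \<gamma> \<or>
     (\<exists>k < length \<gamma>. \<delta> = \<gamma>[k := \<gamma> ! k + 1] \<and> (\<forall>i < k. \<gamma> ! i \<noteq> \<gamma> ! k))"

definition comp_less :: "nat list \<Rightarrow> nat list \<Rightarrow> bool" where
  "comp_less = comp_cover\<^sup>+\<^sup>+"

definition diagram :: "nat list \<Rightarrow> (nat \<times> nat) set" where
  "diagram \<alpha> = {(i, j). 1 \<le> i \<and> i \<le> length \<alpha> \<and> 1 \<le> j \<and> j \<le> \<alpha> ! (i - 1)}"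

definition inner_shape :: "nat list \<Rightarrow> nat list \<Rightarrow> (nat \<times> nat) set" where
  "inner_shape \<delta> \<gamma> = {(length \<delta> - length \<gamma> + i, j) | i j.
      1 \<le> i \<and> i \<le> length \<gamma> \<and> 1 \<le> j \<and> j \<le> \<gamma> ! (i - 1)}"

definition skew :: "nat list \<Rightarrow> nat list \<Rightarrow> (nat \<times> nat) set" where
  "skew \<delta> \<gamma> = diagram \<delta> - inner_shape \<delta> \<gamma>"

definition supp :: "(nat \<times> nat) set \<Rightarrow> nat set" where
  "supp S = snd ` S"

definition interval_shape :: "(nat \<times> nat) set \<Rightarrow> bool" where
  "interval_shape S \<longleftrightarrow> (\<forall>a b c. a \<in> supp S \<and> c \<in> supp S \<and> a \<le> b \<and> b \<le> c \<longrightarrow> b \<in> supp S)"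

definition nc_border_strip :: "(nat \<times> nat) set \<Rightarrow> bool" where
  "nc_border_strip S \<longleftrightarrow> interval_shape S \<and>
     (\<forall>i. (i, 1) \<in> S \<and> (i, 2) \<in> S \<longrightarrow> (\<forall>i'. (i', 1) \<in> S \<longrightarrow> i' \<le> i)) \<and>
     (\<forall>i j. 2 \<le> j \<and> (i, j) \<in> S \<and> (i, Suc j) \<in> S \<longrightarrow> (\<forall>i'. (i', j) \<in> S \<longrightarrow> i \<le> i'))"

text \<open>Box-adding operators; None plays the role of 0.\<close>
fun incr_first :: "nat \<Rightarrow> nat list \<Rightarrow> nat list option" where
  "incr_first v [] = None"
| "incr_first v (x # xs) = (if x = v then Some (Suc x # xs) else map_option ((#) x) (incr_first v xs))"

definition box_op :: "nat \<Rightarrow> nat list option \<Rightarrow> nat list option" where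
  "box_op i a = (case a of None \<Rightarrow> None
      | Some \<alpha> \<Rightarrow> (if i = 0 then None else if i = 1 then Some (1 # \<alpha>) else incr_first (i - 1) \<alpha>))"

text \<open>w = t_{i1} ... t_{in} is the list [i1,...,in]; w(alpha) = t_{i1}(...t_{in}(alpha)).\<close>
definition word_act :: "nat list \<Rightarrow> nat list \<Rightarrow> nat list option" where
  "word_act w \<alpha> = foldr box_op w (Some \<alpha>)"

definition reverse_hookword :: "nat list \<Rightarrow> bool" where
  "reverse_hookword w \<longleftrightarrow> (\<forall>x\<in>set w. 1 \<le> x) \<and>
     (\<exists>k < length w. (\<forall>j < k. w ! j \<le> w ! Suc j) \<and>
                     (\<forall>j. k \<le> j \<and> Suc j < length w \<longrightarrow> w ! j > w ! Suc j))"

definition connected_word :: "nat list \<Rightarrow> bool" where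
  "connected_word w \<longleftrightarrow> set w = {Min (set w) .. Max (set w)}"

definition CRHW :: "nat \<Rightarrow> nat list set" where
  "CRHW n = {w. length w = n \<and> reverse_hookword w \<and> connected_word w}"

end

theory Submission
  imports Defs
begin

lemma incr_first_SomeD:
  "incr_first v xs = Some ys \<Longrightarrow> \<exists>i<length xs. xs!i = v \<and> (\<forall>j<i. xs!j \<noteq> v) \<and> ys = xs[i := Suc v]"
proof (induction xs arbitrary: ys)
  case Nil then show ?case by simp
next
  case (Cons x xs)
  show ?case
  proof (cases "x = v")
    case True then show ?thesis using Cons.prems by (intro exI[of _ 0]) auto
  next
    case False
    then obtain zs where zs: "incr_first v xs = Some zs" "ys = x # zs" using Cons.prems
      by (cases "incr_first v xs") auto
    from Cons.IH[OF zs(1)] obtain i where "i<length xs" "xs!i = v" "\<forall>j<i. xs!j \<noteq> v" "zs = xs[i := Suc v]"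
      by blast
    then show ?thesis using False zs
      by (intro exI[of _ "Suc i"]) (auto simp: less_Suc_eq_0_disj)
  qed
qed

lemma incr_first_intro:
  "i<length xs \<Longrightarrow> xs!i = v \<Longrightarrow> \<forall>j<i. xs!j \<noteq> v \<Longrightarrow> incr_first v xs = Some (xs[i := Suc v])"
proof (induction xs arbitrary: i)
  case Nil then show ?case by simp
next
  case (Cons x xs)
  show ?case
  proof (cases i)
    case 0 then show ?thesis using Cons by simp
  next
    case (Suc i')
    have "x \<noteq> v" using Cons.prems Suc by fastforce
    moreover have "incr_first v xs = Some (xs[i' := Suc v])"
      using Cons.prems Suc by (intro Cons.IH) auto
    ultimately show ?thesis using Suc by simp
  qed
qed

lemma box_op_None[simp]: "box_op c None = None"
  by (simp add: box_op_def)

definition stepB :: "nat \<Rightarrow> nat list \<Rightarrow> nat list \<Rightarrow> bool" where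
"stepB c B B' \<longleftrightarrow> (c = 1 \<and> B' = B @ [1]) \<or>
   (2 \<le> c \<and> (\<exists>q<length B. B!q = c - 1 \<and> (\<forall>q'. q < q' \<and> q' < length B \<longrightarrow> B!q' \<noteq> c - 1) \<and> B' = B[q := c]))"

lemma box_op_stepB:
  assumes "box_op c (Some \<beta>) = Some \<beta>'"
  shows "stepB c (rev \<beta>) (rev \<beta>')"
proof -
  have c0: "c \<noteq> 0" using assms by (auto simp: box_op_def split: if_splits)
  show ?thesis
  proof (cases "c = 1")
    case True then show ?thesis using assms by (auto simp: box_op_def stepB_def)
  next
    case False
    with c0 have c2: "2 \<le> c" by simp
    have "incr_first (c - 1) \<beta> = Some \<beta>'" using assms c0 False by (auto simp: box_op_def)
    from incr_first_SomeD[OF this] obtain i where i: "i<length \<beta>" "\<beta>!i = c - 1"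
      "\<forall>j<i. \<beta>!j \<noteq> c - 1" "\<beta>' = \<beta>[i := Suc (c - 1)]" by blast
    define q where "q = length \<beta> - i - 1"
    have q: "q < length (rev \<beta>)" using i(1) by (simp add: q_def)
    have "rev \<beta> ! q = c - 1" using i by (simp add: q_def rev_nth Suc_diff_Suc)
    moreover have "\<forall>q'. q < q' \<and> q' < length (rev \<beta>) \<longrightarrow> rev \<beta> ! q' \<noteq> c - 1"
      using i(3) by (auto simp: q_def rev_nth)
    moreover have "rev \<beta>' = (rev \<beta>)[q := c]"
      using i(1,4) c2 by (simp add: rev_update q_def)
    ultimately show ?thesis using c2 q unfolding stepB_def by blast
  qed
qed

lemma stepB_box_op:
  assumes "stepB c (rev \<beta>) B'"
  shows "box_op c (Some \<beta>) = Some (rev B')"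
proof (cases "c = 1")
  case True then show ?thesis using assms by (auto simp: box_op_def stepB_def)
next
  case False
  then obtain q where q: "2 \<le> c" "q<length \<beta>" "rev \<beta>!q = c - 1"
    "\<forall>q'. q < q' \<and> q' < length \<beta> \<longrightarrow> rev \<beta>!q' \<noteq> c - 1" "B' = (rev \<beta>)[q := c]"
    using assms by (auto simp: stepB_def)
  define i where "i = length \<beta> - q - 1"
  have i: "i < length \<beta>" using q by (simp add: i_def)
  have "\<beta>!i = c - 1" using q by (simp add: i_def rev_nth Suc_diff_Suc)
  moreover have "\<forall>j<i. \<beta>!j \<noteq> c - 1"
  proof (intro allI impI)
    fix j assume "j < i"
    then have "q < length \<beta> - Suc j" "length \<beta> - Suc j < length \<beta>" using q(2) by (auto simp: i_def)
    then have "rev \<beta> ! (length \<beta> - Suc j) \<noteq> c - 1" using q(4) by simp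
    then show "\<beta>!j \<noteq> c - 1" using \<open>j < i\<close> i by (simp add: rev_nth)
  qed
  ultimately have "incr_first (c - 1) \<beta> = Some (\<beta>[i := Suc (c - 1)])"
    using i by (intro incr_first_intro)
  moreover have "rev B' = \<beta>[i := c]"
    using q by (simp add: rev_update i_def)
  ultimately show ?thesis using q(1) by (auto simp: box_op_def)
qed

inductive stepsB :: "nat list \<Rightarrow> nat list \<Rightarrow> nat list \<Rightarrow> bool" where
  stepsB_Nil: "stepsB [] B B"
| stepsB_Cons: "stepB c B B' \<Longrightarrow> stepsB cs B' B'' \<Longrightarrow> stepsB (c # cs) B B''"

lemma stepsB_Nil_iff[simp]: "stepsB [] B B' \<longleftrightarrow> B' = B"
  by (auto elim: stepsB.cases intro: stepsB.intros)

lemma stepsB_Cons_iff: "stepsB (c # cs) B B'' \<longleftrightarrow> (\<exists>B'. stepB c B B' \<and> stepsB cs B' B'')"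
  by (auto elim: stepsB.cases intro: stepsB.intros)

lemma stepsB_append: "stepsB (xs @ ys) B B'' \<longleftrightarrow> (\<exists>B'. stepsB xs B B' \<and> stepsB ys B' B'')"
  by (induction xs arbitrary: B) (auto simp: stepsB_Cons_iff)

lemma foldr_stepsB:
  "foldr box_op w (Some \<gamma>) = Some \<beta> \<Longrightarrow> stepsB (rev w) (rev \<gamma>) (rev \<beta>)"
proof (induction w arbitrary: \<beta>)
  case Nil then show ?case by simp
next
  case (Cons x w)
  obtain \<beta>' where b'1: "foldr box_op w (Some \<gamma>) = Some \<beta>'"
    using Cons.prems by (cases "foldr box_op w (Some \<gamma>)") auto
  then have b'2: "box_op x (Some \<beta>') = Some \<beta>" using Cons.prems by simp
  note b' = b'1 b'2
  show ?case using Cons.IH[OF b'(1)] box_op_stepB[OF b'(2)]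
    by (auto simp: stepsB_append stepsB_Cons_iff)
qed

lemma stepsB_foldr:
  "stepsB (rev w) (rev \<gamma>) B \<Longrightarrow> foldr box_op w (Some \<gamma>) = Some (rev B)"
proof (induction w arbitrary: B)
  case Nil then show ?case by simp
next
  case (Cons x w)
  then obtain B' where "stepsB (rev w) (rev \<gamma>) B'" "stepB x B' B"
    by (auto simp: stepsB_append stepsB_Cons_iff)
  then show ?case using Cons.IH stepB_box_op[of x "rev B'" B] by simp
qed

context fixes \<alpha> :: "nat list" begin

definition ab :: "nat \<Rightarrow> nat" where "ab q = (if q < length \<alpha> then rev \<alpha> ! q else 0)"

definition boxes :: "nat list \<Rightarrow> (nat \<times> nat) set" where
  "boxes B = {(q,j). q < length B \<and> ab q < j \<and> j \<le> B!q}"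

definition WF :: "nat list \<Rightarrow> bool" where
  "WF B \<longleftrightarrow> length \<alpha> \<le> length B \<and> (\<forall>q<length B. ab q \<le> B!q \<and> 1 \<le> B!q)"

lemma boxes_iff: "(q,j) \<in> boxes B \<longleftrightarrow> q < length B \<and> ab q < j \<and> j \<le> B!q"
  by (simp add: boxes_def)

lemma boxes_col_pos: "(q,j) \<in> boxes B \<Longrightarrow> 1 \<le> j"
  by (simp add: boxes_def)

lemma ab_new: "length \<alpha> \<le> q \<Longrightarrow> ab q = 0"
  by (simp add: ab_def)

lemma finite_boxes: "finite (boxes B)"
proof -
  have "boxes B \<subseteq> {..<length B} \<times> {..Max (insert 0 (set B))}"
    by (auto simp: boxes_def intro!: order.trans[OF _ Max_ge])
  then show ?thesis by (rule finite_subset) auto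
qed

lemma boxes_append1:
  assumes "length \<alpha> \<le> length B"
  shows "boxes (B @ [1]) = insert (length B, 1) (boxes B)"
  using assms by (auto simp: boxes_def nth_append ab_new less_Suc_eq)

lemma boxes_upd:
  assumes "q < length B" "ab q \<le> B!q" "B!q = c - 1" "2 \<le> c"
  shows "boxes (B[q := c]) = insert (q,c) (boxes B)"
proof (rule set_eqI)
  fix x :: "nat \<times> nat"
  obtain a b where x: "x = (a,b)" by fastforce
  show "x \<in> boxes (B[q := c]) \<longleftrightarrow> x \<in> insert (q,c) (boxes B)"
    unfolding x using assms by (cases "a = q") (auto simp: boxes_def)
qed

lemma stepB_cases:
  assumes "stepB c B B'"
  obtains (one) "c = 1" "B' = B @ [1]"
  | (two) q where "2 \<le> c" "q<length B" "B!q = c - 1"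
      "\<forall>q'. q < q' \<and> q' < length B \<longrightarrow> B!q' \<noteq> c - 1" "B' = B[q := c]"
  using assms unfolding stepB_def by auto

lemma WF_step: "WF B \<Longrightarrow> stepB c B B' \<Longrightarrow> WF B'"
  by (erule stepB_cases) (auto simp: WF_def nth_append nth_list_update ab_new less_Suc_eq)

lemma step_boxes:
  assumes "WF B" "stepB c B B'"
  shows "\<exists>q. (q,c) \<notin> boxes B \<and> boxes B' = insert (q,c) (boxes B)"
  using assms(2)
proof (cases rule: stepB_cases)
  case one then show ?thesis using assms(1) boxes_append1[of B]
    by (intro exI[of _ "length B"]) (auto simp: WF_def boxes_def)
next
  case (two q)
  have "ab q \<le> B!q" using assms(1) two(2) unfolding WF_def by blast
  then have "boxes B' = insert (q,c) (boxes B)"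
    using two boxes_upd[OF two(2) _ two(3) two(1)] by simp
  moreover have "(q,c) \<notin> boxes B" using two by (auto simp: boxes_def)
  ultimately show ?thesis by blast
qed

lemma steps_boxes:
  "WF B \<Longrightarrow> stepsB cs B B' \<Longrightarrow>
    WF B' \<and> card (boxes B') = card (boxes B) + length cs \<and> snd ` boxes B' = snd ` boxes B \<union> set cs"
proof (induction cs arbitrary: B)
  case Nil then show ?case by simp
next
  case (Cons c cs)
  then obtain B1 where b1: "stepB c B B1" "stepsB cs B1 B'" by (auto simp: stepsB_Cons_iff)
  have wf1: "WF B1" using WF_step Cons.prems b1 by blast
  obtain q where q: "(q,c) \<notin> boxes B" "boxes B1 = insert (q,c) (boxes B)"
    using step_boxes[OF Cons.prems(1) b1(1)] by blast
  have "card (boxes B1) = card (boxes B) + 1" using q finite_boxes by simp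
  then show ?case using Cons.IH[OF wf1 b1(2)] q by auto
qed

definition ncB :: "(nat \<times> nat) set \<Rightarrow> bool" where
  "ncB S \<longleftrightarrow> (\<forall>q q'. (q,1)\<in>S \<and> (q,2)\<in>S \<and> (q',1)\<in>S \<longrightarrow> q \<le> q') \<and>
     (\<forall>q j q'. 2 \<le> j \<and> (q,j)\<in>S \<and> (q,Suc j)\<in>S \<and> (q',j)\<in>S \<longrightarrow> q' \<le> q)"

definition ChInv :: "nat list \<Rightarrow> nat \<Rightarrow> bool" where
  "ChInv B f \<longleftrightarrow> (\<forall>q j. (q,j) \<in> boxes B \<longrightarrow> j \<le> f \<and> (\<forall>q'. (q',j)\<in>boxes B \<longrightarrow> q' = q) \<and>
      (\<forall>q'. q<q' \<and> q'<length B \<longrightarrow> B!q' \<noteq> j - 1))"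

definition I1 :: "nat list \<Rightarrow> nat \<Rightarrow> bool" where
  "I1 B f \<longleftrightarrow> (\<forall>q j. (q,j) \<in> boxes B \<and> j < f \<longrightarrow> (\<forall>q'. (q',j)\<in>boxes B \<longrightarrow> q' = q) \<and>
      (\<forall>q'. q<q' \<and> q'<length B \<longrightarrow> B!q' \<noteq> j - 1))"

definition I2 :: "nat list \<Rightarrow> nat \<Rightarrow> bool" where
  "I2 B f \<longleftrightarrow> (\<forall>q c. (q,c) \<in> boxes B \<and> (q,Suc c) \<in> boxes B \<and> 2 \<le> c \<and> c \<le> f \<longrightarrow>
      (\<forall>q'. q<q' \<and> q'<length B \<longrightarrow> B!q' \<noteq> c - 1))"

definition Inv :: "nat list \<Rightarrow> nat \<Rightarrow> bool" where
  "Inv B f \<longleftrightarrow> ncB (boxes B) \<and> I1 B f \<and> I2 B f"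

lemma ChInv_Inv: assumes h: "ChInv B f" shows "Inv B f"
proof -
  have u: "\<And>q j q'. (q,j) \<in> boxes B \<Longrightarrow> (q',j) \<in> boxes B \<Longrightarrow> q' = q"
   and a: "\<And>q j q'. (q,j) \<in> boxes B \<Longrightarrow> q<q' \<Longrightarrow> q'<length B \<Longrightarrow> B!q' \<noteq> j - 1"
    using h unfolding ChInv_def by blast+
  show ?thesis unfolding Inv_def I1_def I2_def ncB_def
    by (intro conjI allI impI; (elim conjE)?) (metis u a order_refl)+
qed

lemma ChInv_init: "WF B \<Longrightarrow> boxes B = {} \<Longrightarrow> ChInv B 0"
  by (simp add: ChInv_def)

lemma ChInv_step:
  assumes inv: "ChInv B f" and wf: "WF B" and fc: "f < c" and st: "stepB c B B'"
  shows "ChInv B' c"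
  using st
proof (cases rule: stepB_cases)
  case one
  then have f0: "f = 0" using fc by simp
  have e: "boxes B = {}"
  proof -
    { fix q j assume "(q,j) \<in> boxes B"
      then have "j \<le> 0" "1 \<le> j" using inv f0 boxes_col_pos by (auto simp: ChInv_def) }
    then show ?thesis by fastforce
  qed
  have "boxes B' = {(length B, 1)}" using one e boxes_append1[of B] wf by (simp add: WF_def)
  then show ?thesis using one by (auto simp: ChInv_def)
next
  case (two q0)
  have "ab q0 \<le> B!q0" using wf two(2) unfolding WF_def by blast
  then have bx: "boxes B' = insert (q0,c) (boxes B)"
    using two boxes_upd[OF two(2) _ two(3) two(1)] by simp
  have len: "length B' = length B" using two by simp
  have val: "\<And>q'. B'!q' = (if q' = q0 then c else B!q')" using two by simp
  have oldc: "\<And>q j. (q,j) \<in> boxes B \<Longrightarrow> j \<le> f" using inv by (auto simp: ChInv_def)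
  show ?thesis unfolding ChInv_def
  proof (intro allI impI)
    fix q j assume a: "(q,j) \<in> boxes B'"
    have h1: "j \<le> c" using a bx oldc fc by fastforce
    have h2: "\<forall>q'. (q',j)\<in>boxes B' \<longrightarrow> q' = q"
    proof (intro allI impI)
      fix q' assume b: "(q',j) \<in> boxes B'"
      show "q' = q"
      proof (cases "(q,j) = (q0,c)")
        case True
        then show ?thesis using b bx oldc fc by fastforce
      next
        case False
        then have "(q,j) \<in> boxes B" using a bx by auto
        moreover have "(q',j) \<in> boxes B" using b bx oldc fc \<open>(q,j) \<in> boxes B\<close> by fastforce
        ultimately show ?thesis using inv by (auto simp: ChInv_def)
      qed
    qed
    have h3: "\<forall>q'. q<q' \<and> q'<length B' \<longrightarrow> B'!q' \<noteq> j - 1"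
    proof (intro allI impI)
      fix q' assume b: "q<q' \<and> q'<length B'"
      show "B'!q' \<noteq> j - 1"
      proof (cases "(q,j) = (q0,c)")
        case True
        then show ?thesis using b two val len by auto
      next
        case False
        then have o: "(q,j) \<in> boxes B" using a bx by auto
        then have jf: "j \<le> f" using oldc by blast
        show ?thesis
        proof (cases "q' = q0")
          case True then show ?thesis using val jf fc by simp
        next
          case False then show ?thesis using b val len inv o by (auto simp: ChInv_def)
        qed
      qed
    qed
    show "j \<le> c \<and> (\<forall>q'. (q',j)\<in>boxes B' \<longrightarrow> q' = q) \<and> (\<forall>q'. q<q' \<and> q'<length B' \<longrightarrow> B'!q' \<noteq> j - 1)"
      using h1 h2 h3 by blast
  qed
qed


lemma Inv_step:
  assumes inv: "Inv B f" and wf: "WF B" and c1: "1 \<le> c" and cf: "c \<le> f" and st: "stepB c B B'"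
  shows "Inv B' c"
  using st
proof (cases rule: stepB_cases)
  case one
  have bx: "boxes B' = insert (length B, 1) (boxes B)"
    using one boxes_append1[of B] wf by (simp add: WF_def)
  have old: "\<And>q j. (q,j) \<in> boxes B \<Longrightarrow> q < length B" by (simp add: boxes_def)
  have nc: "ncB (boxes B)" using inv by (simp add: Inv_def)
  have "ncB (boxes B')"
    unfolding ncB_def
  proof (intro conjI allI impI)
    fix q q' assume a: "(q,1) \<in> boxes B' \<and> (q,2) \<in> boxes B' \<and> (q',1) \<in> boxes B'"
    have q2: "(q,2) \<in> boxes B" using a bx by auto
    then have "q < length B" by (rule old)
    then have q1: "(q,1) \<in> boxes B" "(q,2) \<in> boxes B" using a bx q2 by auto
    show "q \<le> q'"
    proof (cases "q' = length B")
      case True then show ?thesis using old q1 by (simp add: less_imp_le)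
    next
      case False then have "(q',1) \<in> boxes B" using a bx by auto
      then show ?thesis using q1 nc by (auto simp: ncB_def)
    qed
  next
    fix q j q' assume a: "2 \<le> j \<and> (q,j) \<in> boxes B' \<and> (q,Suc j) \<in> boxes B' \<and> (q',j) \<in> boxes B'"
    then have "(q,j) \<in> boxes B" "(q, Suc j) \<in> boxes B" "(q',j) \<in> boxes B" using bx by auto
    then show "q' \<le> q" using a nc by (auto simp: ncB_def)
  qed
  moreover have "I1 B' c" using one boxes_col_pos by (fastforce simp: I1_def)
  moreover have "I2 B' c" using one by (simp add: I2_def)
  ultimately show ?thesis by (simp add: Inv_def)
next
  case (two q0)
  have "ab q0 \<le> B!q0" using wf two(2) unfolding WF_def by blast
  then have bx: "boxes B' = insert (q0,c) (boxes B)"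
    using two boxes_upd[OF two(2) _ two(3) two(1)] by simp
  have len: "length B' = length B" using two by simp
  have val: "\<And>q'. B'!q' = (if q' = q0 then c else B!q')" using two by simp
  have nc: "ncB (boxes B)" and i1: "I1 B f" and i2: "I2 B f" using inv by (auto simp: Inv_def)
  have mem: "\<And>a b. (a,b) \<in> boxes B' \<longleftrightarrow> (a = q0 \<and> b = c) \<or> (a,b) \<in> boxes B" using bx by auto
  have nsuc: "(q0, Suc c) \<notin> boxes B" using two by (auto simp: boxes_def)
  have u1: "\<And>q j q'. (q,j) \<in> boxes B \<Longrightarrow> j < f \<Longrightarrow> (q',j) \<in> boxes B \<Longrightarrow> q' = q"
    using i1 unfolding I1_def by blast
  have a1: "\<And>q j q'. (q,j) \<in> boxes B \<Longrightarrow> j < f \<Longrightarrow> q < q' \<Longrightarrow> q' < length B \<Longrightarrow> B!q' \<noteq> j - 1"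
    using i1 unfolding I1_def by blast
  have a2: "\<And>q c' q'. (q,c') \<in> boxes B \<Longrightarrow> (q,Suc c') \<in> boxes B \<Longrightarrow> 2 \<le> c' \<Longrightarrow> c' \<le> f \<Longrightarrow>
      q < q' \<Longrightarrow> q' < length B \<Longrightarrow> B!q' \<noteq> c' - 1"
    using i2 unfolding I2_def by blast
  have "ncB (boxes B')"
    unfolding ncB_def
  proof (intro conjI allI impI)
    fix p p' assume a: "(p,1) \<in> boxes B' \<and> (p,2) \<in> boxes B' \<and> (p',1) \<in> boxes B'"
    have p1: "(p,1) \<in> boxes B" "(p',1) \<in> boxes B" using a mem two(1) by auto
    show "p \<le> p'"
    proof (cases "(p,2) \<in> boxes B")
      case True then show ?thesis using p1 nc by (auto simp: ncB_def)
    next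
      case False
      then have "p = q0" "c = 2" using a mem by auto
      then show ?thesis using u1[OF p1(1) _ p1(2)] cf by simp
    qed
  next
    fix p j p' assume a: "2 \<le> j \<and> (p,j) \<in> boxes B' \<and> (p,Suc j) \<in> boxes B' \<and> (p',j) \<in> boxes B'"
    show "p' \<le> p"
    proof (cases "p = q0 \<and> Suc j = c")
      case True
      then have "(p,j) \<in> boxes B" using a mem by auto
      moreover have "(p',j) \<in> boxes B" using a mem True by auto
      ultimately show ?thesis using u1 True cf by fastforce
    next
      case F1: False
      then have s1: "(p,Suc j) \<in> boxes B" using a mem by auto
      have s0: "(p,j) \<in> boxes B" using a mem s1 nsuc by auto
      show ?thesis
      proof (cases "(p',j) \<in> boxes B")
        case True then show ?thesis using s0 s1 a nc by (auto simp: ncB_def)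
      next
        case False
        then have pq: "p' = q0" "j = c" using a mem by auto
        show ?thesis
        proof (rule ccontr)
          assume "\<not> p' \<le> p"
          then have "B!q0 \<noteq> c - 1" using a2[OF s0 s1] a pq cf two(2) by auto
          then show False using two(3) by simp
        qed
      qed
    qed
  qed
  moreover have "I1 B' c"
    unfolding I1_def
  proof (intro allI impI conjI)
    fix p j p' assume a: "(p,j) \<in> boxes B' \<and> j < c" "(p',j) \<in> boxes B'"
    then have "(p,j) \<in> boxes B" "(p',j) \<in> boxes B" using mem by auto
    then show "p' = p" using u1 a cf by simp
  next
    fix p j p' assume a: "(p,j) \<in> boxes B' \<and> j < c" "p < p' \<and> p' < length B'"
    then have o: "(p,j) \<in> boxes B" using mem by auto
    show "B'!p' \<noteq> j - 1"
    proof (cases "p' = q0")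
      case True then show ?thesis using val a by auto
    next
      case False then show ?thesis using val a1[OF o] a cf len by simp
    qed
  qed
  moreover have "I2 B' c"
    unfolding I2_def
  proof (intro allI impI)
    fix p c0 p' assume a: "(p,c0) \<in> boxes B' \<and> (p,Suc c0) \<in> boxes B' \<and> 2 \<le> c0 \<and> c0 \<le> c"
       "p < p' \<and> p' < length B'"
    show "B'!p' \<noteq> c0 - 1"
    proof (cases "p = q0 \<and> Suc c0 = c")
      case True
      then have o: "(p,c0) \<in> boxes B" using a mem by auto
      have "p' \<noteq> q0" using a True by simp
      then show ?thesis using val a1[OF o, of p'] a True cf len by simp
    next
      case F1: False
      then have s1: "(p,Suc c0) \<in> boxes B" using a mem by auto
      have s0: "(p,c0) \<in> boxes B" using a mem s1 nsuc by auto
      show ?thesis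
      proof (cases "p' = q0")
        case True then show ?thesis using val a by auto
      next
        case False then show ?thesis using val a2[OF s0 s1, of p'] a cf len by simp
      qed
    qed
  qed
  ultimately show ?thesis by (simp add: Inv_def)
qed

end

lemma rhw_iff: "reverse_hookword w \<longleftrightarrow> (\<forall>x\<in>set w. 1 \<le> x) \<and>
   (\<exists>xs ys. w = xs @ ys \<and> ys \<noteq> [] \<and> sorted xs \<and> sorted_wrt (>) ys \<and> (\<forall>x\<in>set xs. x \<le> hd ys))"
proof
  assume h: "reverse_hookword w"
  then obtain k where k: "k < length w" "\<forall>j<k. w!j \<le> w!Suc j"
    "\<forall>j. k \<le> j \<and> Suc j < length w \<longrightarrow> w!j > w!Suc j" and pos: "\<forall>x\<in>set w. 1 \<le> x"
    unfolding reverse_hookword_def by blast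
  have s1: "sorted (take (Suc k) w)"
    unfolding sorted_iff_nth_Suc using k by auto
  have tk: "take (Suc k) w = take k w @ [w!k]" using k(1) by (simp add: take_Suc_conv_app_nth)
  have hd: "hd (drop k w) = w!k" using k(1) by (simp add: hd_drop_conv_nth)
  have tr: "transp ((>) :: nat \<Rightarrow> nat \<Rightarrow> bool)" by (auto simp: transp_def)
  have s2: "sorted_wrt (>) (drop k w)"
    unfolding sorted_wrt_iff_nth_Suc_transp[OF tr]
    using k by auto
  show "(\<forall>x\<in>set w. 1 \<le> x) \<and> (\<exists>xs ys. w = xs @ ys \<and> ys \<noteq> [] \<and> sorted xs \<and> sorted_wrt (>) ys \<and> (\<forall>x\<in>set xs. x \<le> hd ys))"
  proof -
    have "w = take k w @ drop k w" by simp
    moreover have "drop k w \<noteq> []" using k(1) by simp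
    moreover have "sorted (take k w)" using s1 unfolding tk sorted_append by blast
    moreover have "\<forall>x\<in>set (take k w). x \<le> hd (drop k w)" using s1 unfolding tk sorted_append hd by simp
    ultimately show ?thesis using pos s2 by blast
  qed
next
  assume "(\<forall>x\<in>set w. 1 \<le> x) \<and> (\<exists>xs ys. w = xs @ ys \<and> ys \<noteq> [] \<and> sorted xs \<and> sorted_wrt (>) ys \<and> (\<forall>x\<in>set xs. x \<le> hd ys))"
  then obtain xs ys where h: "\<forall>x\<in>set w. 1 \<le> x" "w = xs @ ys" "ys \<noteq> []" "sorted xs" "sorted_wrt (>) ys"
     "\<forall>x\<in>set xs. x \<le> hd ys" by blast
  define k where "k = length xs"
  have "k < length w" using h by (simp add: k_def)
  moreover have "\<forall>j<k. w!j \<le> w!Suc j"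
  proof (intro allI impI)
    fix j assume j: "j < k"
    show "w!j \<le> w!Suc j"
    proof (cases "Suc j < k")
      case True then show ?thesis using h j by (simp add: nth_append k_def sorted_nth_mono)
    next
      case False
      then have "Suc j = k" using j by simp
      moreover have "xs!j \<in> set xs" using j by (simp add: k_def)
      ultimately show ?thesis using h j by (simp add: nth_append k_def hd_conv_nth)
    qed
  qed
  moreover have "\<forall>j. k \<le> j \<and> Suc j < length w \<longrightarrow> w!j > w!Suc j"
  proof (intro allI impI)
    fix j assume j: "k \<le> j \<and> Suc j < length w"
    then have "ys!(j - k) > ys!(Suc j - k)"
      using sorted_wrt_nth_less[OF h(5), of "j-k" "Suc j - k"] h by (auto simp: k_def)
    then show "w!j > w!Suc j" using h j by (simp add: nth_append k_def not_less Suc_diff_le)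
  qed
  ultimately show "reverse_hookword w" using h(1) unfolding reverse_hookword_def by blast
qed

lemma chain_inv:
  "WF \<alpha> B \<Longrightarrow> ChInv \<alpha> B f \<Longrightarrow> stepsB d B B' \<Longrightarrow> sorted_wrt (<) d \<Longrightarrow> (\<forall>x\<in>set d. f < x) \<Longrightarrow>
    ChInv \<alpha> B' (last (f#d)) \<and> WF \<alpha> B'"
proof (induction d arbitrary: B f)
  case Nil then show ?case by simp
next
  case (Cons c d)
  then obtain B1 where b1: "stepB c B B1" "stepsB d B1 B'" by (auto simp: stepsB_Cons_iff)
  have "ChInv \<alpha> B1 c" using ChInv_step Cons.prems b1 by simp
  moreover have "WF \<alpha> B1" using WF_step Cons.prems b1 by blast
  ultimately have "ChInv \<alpha> B' (last (c#d)) \<and> WF \<alpha> B'" using Cons.IH b1 Cons.prems by auto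
  then show ?case by simp
qed

lemma phase_inv:
  "WF \<alpha> B \<Longrightarrow> Inv \<alpha> B f \<Longrightarrow> stepsB ph B B' \<Longrightarrow> sorted_wrt (\<ge>) ph \<Longrightarrow> (\<forall>x\<in>set ph. 1 \<le> x \<and> x \<le> f) \<Longrightarrow>
    Inv \<alpha> B' (last (f#ph)) \<and> WF \<alpha> B'"
proof (induction ph arbitrary: B f)
  case Nil then show ?case by simp
next
  case (Cons c ph)
  then obtain B1 where b1: "stepB c B B1" "stepsB ph B1 B'" by (auto simp: stepsB_Cons_iff)
  have "Inv \<alpha> B1 c" using Inv_step Cons.prems b1 by simp
  moreover have "WF \<alpha> B1" using WF_step Cons.prems b1 by blast
  ultimately have "Inv \<alpha> B' (last (c#ph)) \<and> WF \<alpha> B'" using Cons.IH b1 Cons.prems by auto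
  then show ?case by simp
qed

lemma WF_init: assumes "is_composition \<alpha>" shows "WF \<alpha> (rev \<alpha>)"
proof -
  have "\<And>q. q < length \<alpha> \<Longrightarrow> rev \<alpha> ! q \<in> set \<alpha>"
    by (metis length_rev nth_mem set_rev)
  then show ?thesis using assms by (fastforce simp: WF_def ab_def is_composition_def Suc_le_eq)
qed

lemma boxes_init: "boxes \<alpha> (rev \<alpha>) = {}"
  by (auto simp: boxes_def ab_def)

lemma subset_core:
  assumes comp: "is_composition \<alpha>" and wa: "word_act w \<alpha> = Some \<beta>" and rhw: "reverse_hookword w"
  shows "ncB (boxes \<alpha> (rev \<beta>)) \<and> card (boxes \<alpha> (rev \<beta>)) = length w \<and>
         snd ` boxes \<alpha> (rev \<beta>) = set w \<and> WF \<alpha> (rev \<beta>)"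
proof -
  have st: "stepsB (rev w) (rev \<alpha>) (rev \<beta>)" using wa unfolding word_act_def by (rule foldr_stepsB)
  obtain xs ys where h: "\<forall>x\<in>set w. 1 \<le> x" "w = xs @ ys" "ys \<noteq> []" "sorted xs" "sorted_wrt (>) ys"
     "\<forall>x\<in>set xs. x \<le> hd ys" using rhw[unfolded rhw_iff] by blast
  have "rev w = rev ys @ rev xs" using h by simp
  then have "stepsB (rev ys @ rev xs) (rev \<alpha>) (rev \<beta>)" using st by simp
  then obtain B1 where b1: "stepsB (rev ys) (rev \<alpha>) B1" "stepsB (rev xs) B1 (rev \<beta>)"
    unfolding stepsB_append by blast
  have wf0: "WF \<alpha> (rev \<alpha>)" using WF_init comp .
  have ch0: "ChInv \<alpha> (rev \<alpha>) 0" using ChInv_init wf0 boxes_init by blast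
  have "sorted_wrt (<) (rev ys)" using h(5) by (simp add: sorted_wrt_rev)
  moreover have "\<forall>x\<in>set (rev ys). 0 < x" using h(1,2) by auto
  ultimately have c1: "ChInv \<alpha> B1 (last (0 # rev ys)) \<and> WF \<alpha> B1"
    using chain_inv[OF wf0 ch0 b1(1)] by blast
  have lst: "last (0 # rev ys) = hd ys" using h(3) by (simp add: last_rev)
  have "sorted_wrt (\<ge>) (rev xs)" using h(4) by (simp add: sorted_wrt_rev)
  moreover have "\<forall>x\<in>set (rev xs). 1 \<le> x \<and> x \<le> hd ys" using h by auto
  moreover have "Inv \<alpha> B1 (hd ys)" "WF \<alpha> B1" using c1 ChInv_Inv lst by auto
  ultimately have "Inv \<alpha> (rev \<beta>) (last (hd ys # rev xs)) \<and> WF \<alpha> (rev \<beta>)"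
    using phase_inv[OF _ _ b1(2)] by blast
  moreover have "card (boxes \<alpha> (rev \<beta>)) = length w \<and> snd ` boxes \<alpha> (rev \<beta>) = set w"
    using steps_boxes[OF wf0 st] boxes_init by simp
  ultimately show ?thesis by (simp add: Inv_def)
qed

locale target =
  fixes \<alpha> :: "nat list" and B :: "nat list"
  assumes comp: "is_composition \<alpha>"
    and wfB: "WF \<alpha> B"
    and R: "\<And>q q'. q < q' \<Longrightarrow> q' < length \<alpha> \<Longrightarrow> ab \<alpha> q \<le> ab \<alpha> q' \<Longrightarrow> B!q \<le> B!q'"
    and ncS: "ncB (boxes \<alpha> B)"
    and neS: "boxes \<alpha> B \<noteq> {}"
begin

abbreviation "S \<equiv> boxes \<alpha> B"
abbreviation "abq \<equiv> ab \<alpha>"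

definition M :: nat where "M = Max (snd ` S)"
definition Lk :: "nat set" where "Lk = {j. \<exists>q. (q,j) \<in> S \<and> (q,Suc j) \<in> S}"
definition D :: "nat set" where "D = insert M Lk"
definition ch :: "nat \<Rightarrow> nat \<Rightarrow> bool" where
  "ch q j \<longleftrightarrow> (q,j) \<in> S \<and> j \<in> D \<and> (2 \<le> j \<longrightarrow> (\<forall>q'. (q',j)\<in>S \<longrightarrow> q' \<le> q)) \<and>
      (j = 1 \<longrightarrow> (\<forall>q'. (q',1)\<in>S \<longrightarrow> q \<le> q'))"

lemma S_iff: "(q,j) \<in> S \<longleftrightarrow> q < length B \<and> abq q < j \<and> j \<le> B!q"
  by (simp add: boxes_def)

lemma ab_pos: "q < length \<alpha> \<Longrightarrow> 1 \<le> abq q"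
proof -
  assume q: "q < length \<alpha>"
  have "rev \<alpha> ! q \<in> set \<alpha>" using q by (metis length_rev nth_mem set_rev)
  then show ?thesis using comp q by (auto simp: ab_def is_composition_def Suc_le_eq)
qed

lemma ab_zero: "length \<alpha> \<le> q \<Longrightarrow> abq q = 0"
  by (simp add: ab_def)

lemma lenB: "length \<alpha> \<le> length B" using wfB by (simp add: WF_def)

lemma B_ge: "q < length B \<Longrightarrow> abq q \<le> B!q \<and> 1 \<le> B!q" using wfB by (simp add: WF_def)

lemma col1: "(q,1) \<in> S \<longleftrightarrow> length \<alpha> \<le> q \<and> q < length B"
proof
  assume "(q,1) \<in> S"
  then have "abq q < 1" "q < length B" by (auto simp: S_iff)
  then show "length \<alpha> \<le> q \<and> q < length B" using ab_pos by (meson leI not_le)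
next
  assume "length \<alpha> \<le> q \<and> q < length B"
  then show "(q,1) \<in> S" using B_ge ab_zero by (auto simp: S_iff)
qed

lemma finS: "finite S" by (rule finite_boxes)

lemma M_ge: "(q,j) \<in> S \<Longrightarrow> j \<le> M"
  unfolding M_def using finS by (auto intro!: Max_ge intro: rev_image_eqI)

lemma M_mem: "\<exists>q. (q,M) \<in> S"
proof -
  have "M \<in> snd ` S" unfolding M_def using finS neS by (intro Max_in) auto
  then show ?thesis by force
qed

lemma row_prefix: "(q,j) \<in> S \<Longrightarrow> abq q < j' \<Longrightarrow> j' \<le> j \<Longrightarrow> (q,j') \<in> S"
  by (auto simp: S_iff)

lemma S_col_pos: "(q,j) \<in> S \<Longrightarrow> 1 \<le> j"
  by (auto simp: S_iff)

lemma F: assumes "(q,j) \<in> S" "(q,Suc j) \<in> S" shows "ch q j"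
proof -
  have "j \<in> D" using assms by (auto simp: D_def Lk_def)
  moreover have "1 \<le> j" using assms(1) S_col_pos by blast
  ultimately show ?thesis using assms ncS unfolding ch_def ncB_def
    by (metis numeral_2_eq_2 One_nat_def)
qed

lemma uniq: assumes "ch q j" "ch q' j" shows "q = q'"
proof -
  have "1 \<le> j" using assms(1) S_col_pos by (auto simp: ch_def)
  then consider "j = 1" | "2 \<le> j" by linarith
  then show ?thesis using assms unfolding ch_def by cases (meson antisym)+
qed

lemma last_ch: assumes "ch q j" "(q, Suc j) \<notin> S" shows "j = M"
proof (rule ccontr)
  assume "j \<noteq> M"
  then have "j \<in> Lk" using assms by (auto simp: ch_def D_def)
  then obtain q0 where "(q0,j) \<in> S" "(q0,Suc j) \<in> S" by (auto simp: Lk_def)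
  then have "ch q0 j" "(q0,Suc j) \<in> S" using F by auto
  then show False using uniq assms by blast
qed

lemma D_bounds: "j \<in> D \<Longrightarrow> 1 \<le> j \<and> j \<le> M"
proof -
  assume "j \<in> D"
  then consider "j = M" | q where "(q,j) \<in> S" "(q,Suc j) \<in> S" by (auto simp: D_def Lk_def)
  then show "1 \<le> j \<and> j \<le> M"
  proof cases
    case 1 then show ?thesis using M_mem S_col_pos by blast
  next
    case 2 then show ?thesis using S_col_pos M_ge by fastforce
  qed
qed

lemma finD: "finite D"
  by (rule finite_subset[of _ "{..M}"]) (auto dest: D_bounds)

lemma M_D: "M \<in> D" by (simp add: D_def)

lemma ch_exists: assumes "j \<in> D" shows "\<exists>q. ch q j"
proof -
  have "\<exists>q. (q,j) \<in> S"
    using assms M_mem by (auto simp: D_def Lk_def)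
  define Q where "Q = {q. (q,j) \<in> S}"
  have finQ: "finite Q" unfolding Q_def by (rule finite_subset[of _ "fst ` S"]) (auto simp: finS intro: rev_image_eqI)
  have neQ: "Q \<noteq> {}" using \<open>\<exists>q. (q,j) \<in> S\<close> by (auto simp: Q_def)
  have j1: "1 \<le> j" using assms D_bounds by blast
  show ?thesis
  proof (cases "j = 1")
    case True
    have "Min Q \<in> Q" using finQ neQ by (rule Min_in)
    moreover have "\<forall>q'. (q',1)\<in>S \<longrightarrow> Min Q \<le> q'" using finQ True by (auto simp: Q_def)
    ultimately show ?thesis using True assms by (intro exI[of _ "Min Q"]) (auto simp: ch_def Q_def)
  next
    case False
    have "Max Q \<in> Q" using finQ neQ by (rule Max_in)
    moreover have "\<forall>q'. (q',j)\<in>S \<longrightarrow> q' \<le> Max Q" using finQ by (auto simp: Q_def)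
    ultimately show ?thesis using False assms by (intro exI[of _ "Max Q"]) (auto simp: ch_def Q_def)
  qed
qed

lemma val_from_boxes:
  assumes "WF \<alpha> B'" "q < length B'" "abq q \<le> v" "abq q < v \<longrightarrow> (q,v) \<in> boxes \<alpha> B'"
    "(q,Suc v) \<notin> boxes \<alpha> B'"
  shows "B'!q = v"
proof -
  have "abq q \<le> B'!q" using assms(1,2) by (simp add: WF_def)
  show ?thesis
  proof (rule ccontr)
    assume "B'!q \<noteq> v"
    then consider "B'!q > v" | "B'!q < v" by linarith
    then show False
    proof cases
      case 1 then show False using assms by (auto simp: boxes_def)
    next
      case 2 then show False using assms \<open>abq q \<le> B'!q\<close> by (auto simp: boxes_def)
    qed
  qed
qed

lemma le_from_boxes:
  assumes "WF \<alpha> B'" "boxes \<alpha> B' \<subseteq> S" "q < length B'"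
  shows "q < length B \<and> B'!q \<le> B!q"
proof -
  have a: "abq q \<le> B'!q" "1 \<le> B'!q" using assms(1,3) by (auto simp: WF_def)
  have ql: "q < length B"
  proof (cases "q < length \<alpha>")
    case True then show ?thesis using lenB by simp
  next
    case False
    then have "(q,1) \<in> boxes \<alpha> B'" using a assms(3) ab_zero by (auto simp: boxes_def)
    then show ?thesis using assms(2) by (auto simp: S_iff)
  qed
  show ?thesis
  proof (cases "abq q < B'!q")
    case True
    then have "(q, B'!q) \<in> boxes \<alpha> B'" using assms(3) by (auto simp: boxes_def)
    then show ?thesis using assms(2) ql by (auto simp: S_iff)
  next
    case False then have "B'!q = abq q" using a by simp
    then show ?thesis using B_ge[OF ql] ql by simp
  qed
qed

end

context target begin

definition T :: "nat set \<Rightarrow> (nat \<times> nat) set" where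
  "T E = {(q,j). ch q j \<and> j \<in> E}"

lemma ch_S: "ch q j \<Longrightarrow> (q,j) \<in> S" by (simp add: ch_def)

lemma T_sub: "T E \<subseteq> S" by (auto simp: T_def ch_def)

lemma chain_step:
  assumes wf': "WF \<alpha> B'" and bx: "boxes \<alpha> B' = T E" and cD: "c \<in> D"
    and lt: "\<forall>j\<in>E. j < c" and cov: "\<forall>j\<in>D. j < c \<longrightarrow> j \<in> E"
  shows "\<exists>B''. stepB c B' B'' \<and> boxes \<alpha> B'' = T (insert c E) \<and> WF \<alpha> B''"
proof (cases "c = 1")
  case True
  have e: "boxes \<alpha> B' = {}"
  proof -
    { fix q j assume "(q,j) \<in> boxes \<alpha> B'"
      then have "j \<in> E" "1 \<le> j" using bx by (auto simp: T_def ch_def dest: S_col_pos)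
      then have False using lt True by auto }
    then show ?thesis by fastforce
  qed
  have len: "length B' = length \<alpha>"
  proof (rule ccontr)
    assume "length B' \<noteq> length \<alpha>"
    then have "length \<alpha> < length B'" using wf' by (simp add: WF_def)
    then have "(length \<alpha>, 1) \<in> boxes \<alpha> B'" using wf' ab_zero by (auto simp: WF_def boxes_def)
    then show False using e by simp
  qed
  have st: "stepB c B' (B' @ [1])" using True by (simp add: stepB_def)
  have bx2: "boxes \<alpha> (B' @ [1]) = {(length \<alpha>, 1)}"
    using boxes_append1[of \<alpha> B'] len e by simp
  obtain q0 where q0: "ch q0 1" using ch_exists cD True by blast
  then have "(q0,1) \<in> S" by (rule ch_S)
  then have "length \<alpha> < length B" using col1 by simp
  then have inS: "(length \<alpha>, 1) \<in> S" using col1 by simp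
  have chl: "ch (length \<alpha>) 1" using inS cD True col1 by (auto simp: ch_def)
  have chpos: "\<And>a b. ch a b \<Longrightarrow> 1 \<le> b" using ch_S S_col_pos by blast
  have "T (insert c E) = {(length \<alpha>, 1)}"
  proof (rule set_eqI)
    fix x :: "nat \<times> nat"
    obtain a b where x: "x = (a,b)" by fastforce
    show "x \<in> T (insert c E) \<longleftrightarrow> x \<in> {(length \<alpha>, 1)}"
    proof
      assume "x \<in> T (insert c E)"
      then have ab: "ch a b" "b \<in> insert c E" by (auto simp: T_def x)
      have "b = 1"
      proof (cases "b \<in> E")
        case True then show ?thesis using lt \<open>c = 1\<close> chpos[OF ab(1)] by auto
      next
        case False then show ?thesis using ab \<open>c = 1\<close> by simp
      qed
      then have "a = length \<alpha>" using uniq ab(1) chl by blast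
      then show "x \<in> {(length \<alpha>, 1)}" using x \<open>b = 1\<close> by simp
    next
      assume "x \<in> {(length \<alpha>, 1)}"
      then show "x \<in> T (insert c E)" using chl \<open>c = 1\<close> by (simp add: T_def)
    qed
  qed
  moreover have "WF \<alpha> (B' @ [1])" using WF_step wf' st by blast
  ultimately show ?thesis using st bx2 by auto
next
  case False
  then have c2: "2 \<le> c" using cD D_bounds by fastforce
  obtain p where chp: "ch p c" using ch_exists cD by blast
  have pS: "(p,c) \<in> S" using chp ch_S by blast
  have top: "\<And>q'. (q',c) \<in> S \<Longrightarrow> q' \<le> p" using chp c2 by (auto simp: ch_def)
  have sub: "boxes \<alpha> B' \<subseteq> S" using bx T_sub by simp
  have abp: "abq p < c" "c \<le> B!p" "p < length B" using pS by (auto simp: S_iff)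
  have plen: "p < length B'"
  proof (cases "p < length \<alpha>")
    case True then show ?thesis using wf' by (simp add: WF_def)
  next
    case False
    then have "abq p = 0" by (simp add: ab_zero)
    then have "(p,1) \<in> S" "(p,Suc 1) \<in> S" using pS c2 row_prefix by auto
    then have "ch p 1" by (rule F)
    moreover have "1 \<in> E" using cov c2 \<open>ch p 1\<close> by (auto simp: ch_def)
    ultimately have "(p,1) \<in> boxes \<alpha> B'" using bx by (simp add: T_def)
    then show ?thesis by (simp add: boxes_def)
  qed
  have valp: "B'!p = c - 1"
  proof (rule val_from_boxes[OF wf' plen])
    show "abq p \<le> c - 1" using abp by simp
    show "abq p < c - 1 \<longrightarrow> (p, c - 1) \<in> boxes \<alpha> B'"
    proof
      assume "abq p < c - 1"
      then have "(p, c - 1) \<in> S" using pS row_prefix by simp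
      moreover have "(p, Suc (c - 1)) \<in> S" using pS c2 by simp
      ultimately have "ch p (c - 1)" by (rule F)
      moreover have "c - 1 \<in> E" using cov c2 \<open>ch p (c - 1)\<close> by (auto simp: ch_def)
      ultimately show "(p, c - 1) \<in> boxes \<alpha> B'" using bx by (simp add: T_def)
    qed
    show "(p, Suc (c - 1)) \<notin> boxes \<alpha> B'" using bx lt c2 by (auto simp: T_def)
  qed
  have mx: "\<forall>q. p < q \<and> q < length B' \<longrightarrow> B'!q \<noteq> c - 1"
  proof (intro allI impI notI)
    fix q assume q: "p < q \<and> q < length B'" and v: "B'!q = c - 1"
    have lq: "q < length B" "B'!q \<le> B!q" using le_from_boxes[OF wf' sub] q by auto
    have "abq q \<le> B'!q" using wf' q unfolding WF_def by blast
    then have abq: "abq q \<le> c - 1" using v by simp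
    have Bq: "B!q = c - 1"
    proof (rule ccontr)
      assume "B!q \<noteq> c - 1"
      then have "c \<le> B!q" using lq v by simp
      then have "(q,c) \<in> S" using lq abq c2 by (auto simp: S_iff)
      then show False using top[of q] q by simp
    qed
    show False
    proof (cases "abq q = c - 1")
      case True
      have ql: "q < length \<alpha>"
      proof (rule ccontr)
        assume "\<not> q < length \<alpha>"
        then have "abq q = 0" by (simp add: ab_zero)
        then show False using True c2 by simp
      qed
      have "abq p \<le> abq q" using abp True by simp
      then have "B!p \<le> B!q" using R[of p q] q ql by blast
      then show False using Bq abp by simp
    next
      case False
      then have "abq q < c - 1" using abq by simp
      then have "(q, c - 1) \<in> boxes \<alpha> B'" using q v by (simp add: boxes_def)
      then have "ch q (c - 1)" using bx by (simp add: T_def)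
      moreover have "(q, Suc (c - 1)) \<notin> S" using Bq c2 by (auto simp: S_iff)
      ultimately have "c - 1 = M" by (rule last_ch)
      then show False using D_bounds[OF cD] c2 by simp
    qed
  qed
  define B'' where "B'' = B'[p := c]"
  have st: "stepB c B' B''" unfolding stepB_def B''_def using c2 plen valp mx by auto
  have "abq p \<le> B'!p" using wf' plen by (simp add: WF_def)
  then have bx2: "boxes \<alpha> B'' = insert (p,c) (boxes \<alpha> B')"
    unfolding B''_def using boxes_upd[OF plen _ valp c2] by simp
  have "T (insert c E) = insert (p,c) (T E)"
    using uniq chp by (auto simp: T_def)
  moreover have "WF \<alpha> B''" using WF_step wf' st by blast
  ultimately show ?thesis using st bx2 bx by auto
qed

end

context target begin

lemma chain_list:
  "sorted_wrt (<) ds \<Longrightarrow> set ds \<subseteq> D \<Longrightarrow> (\<forall>j\<in>E. \<forall>x\<in>set ds. j < x) \<Longrightarrow> (\<forall>j\<in>D. j \<in> E \<or> j \<in> set ds) \<Longrightarrow>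
   WF \<alpha> B' \<Longrightarrow> boxes \<alpha> B' = T E \<Longrightarrow>
   \<exists>B''. stepsB ds B' B'' \<and> boxes \<alpha> B'' = T (E \<union> set ds) \<and> WF \<alpha> B''"
proof (induction ds arbitrary: E B')
  case Nil then show ?case by simp
next
  case (Cons c ds)
  have "\<forall>j\<in>E. j < c" using Cons.prems(3) by simp
  moreover have "\<forall>j\<in>D. j < c \<longrightarrow> j \<in> E" using Cons.prems(1,4) by fastforce
  moreover have "c \<in> D" using Cons.prems(2) by simp
  ultimately obtain B1 where b1: "stepB c B' B1" "boxes \<alpha> B1 = T (insert c E)" "WF \<alpha> B1"
    using chain_step Cons.prems(5,6) by blast
  have "\<exists>B''. stepsB ds B1 B'' \<and> boxes \<alpha> B'' = T (insert c E \<union> set ds) \<and> WF \<alpha> B''"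
  proof (rule Cons.IH)
    show "sorted_wrt (<) ds" using Cons.prems(1) by simp
    show "set ds \<subseteq> D" using Cons.prems(2) by simp
    show "\<forall>j\<in>insert c E. \<forall>x\<in>set ds. j < x" using Cons.prems(1,3) by auto
    show "\<forall>j\<in>D. j \<in> insert c E \<or> j \<in> set ds" using Cons.prems(4) by auto
  qed (use b1 in auto)
  then show ?case using b1(1) by (auto simp: stepsB_Cons_iff)
qed

definition P :: "nat \<Rightarrow> nat \<Rightarrow> (nat \<times> nat) set" where
  "P c t = {(q,j). (q,j) \<in> S \<and> (ch q j \<or> c < j \<or> (j = c \<and> t \<le> q))}"

definition nch :: "nat \<Rightarrow> nat \<Rightarrow> bool" where
  "nch q c \<longleftrightarrow> (q,c) \<in> S \<and> \<not> ch q c"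

lemma P_sub: "P c t \<subseteq> S" by (auto simp: P_def)

lemma phase_step:
  assumes c2: "2 \<le> c" and cM: "c \<le> M" and wf': "WF \<alpha> B'" and bx: "boxes \<alpha> B' = P c t"
    and np: "nch p c" and pt: "p < t" and pmax: "\<forall>q. nch q c \<and> q < t \<longrightarrow> q \<le> p"
  shows "\<exists>B''. stepB c B' B'' \<and> boxes \<alpha> B'' = P c p \<and> WF \<alpha> B''"
proof -
  have pS: "(p,c) \<in> S" and nchp: "\<not> ch p c" using np by (auto simp: nch_def)
  have sub: "boxes \<alpha> B' \<subseteq> S" using bx P_sub by simp
  have abp: "abq p < c" "c \<le> B!p" "p < length B" using pS by (auto simp: S_iff)
  have plen: "p < length B'"
  proof (cases "p < length \<alpha>")
    case True then show ?thesis using wf' by (simp add: WF_def)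
  next
    case False
    then have "abq p = 0" by (simp add: ab_zero)
    then have "(p,1) \<in> S" "(p,Suc 1) \<in> S" using pS c2 row_prefix by auto
    then have "ch p 1" by (rule F)
    then have "(p,1) \<in> boxes \<alpha> B'" using bx \<open>(p,1) \<in> S\<close> by (simp add: P_def)
    then show ?thesis by (simp add: boxes_def)
  qed
  have valp: "B'!p = c - 1"
  proof (rule val_from_boxes[OF wf' plen])
    show "abq p \<le> c - 1" using abp by simp
    show "abq p < c - 1 \<longrightarrow> (p, c - 1) \<in> boxes \<alpha> B'"
    proof
      assume "abq p < c - 1"
      then have "(p, c - 1) \<in> S" using pS row_prefix by simp
      moreover have "(p, Suc (c - 1)) \<in> S" using pS c2 by simp
      ultimately have "ch p (c - 1)" by (rule F)
      then show "(p, c - 1) \<in> boxes \<alpha> B'" using bx \<open>(p, c - 1) \<in> S\<close> by (simp add: P_def)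
    qed
    show "(p, Suc (c - 1)) \<notin> boxes \<alpha> B'" using bx c2 nchp pt by (auto simp: P_def)
  qed
  have mx: "\<forall>q. p < q \<and> q < length B' \<longrightarrow> B'!q \<noteq> c - 1"
  proof (intro allI impI notI)
    fix q assume q: "p < q \<and> q < length B'" and v: "B'!q = c - 1"
    have lq: "q < length B" "B'!q \<le> B!q" using le_from_boxes[OF wf' sub] q by auto
    have "abq q \<le> B'!q" using wf' q unfolding WF_def by blast
    then have abq: "abq q \<le> c - 1" using v by simp
    have Bq: "B!q = c - 1"
    proof (rule ccontr)
      assume "B!q \<noteq> c - 1"
      then have "c \<le> B!q" using lq v by simp
      then have qS: "(q,c) \<in> S" using lq abq c2 by (auto simp: S_iff)
      have "(q,c) \<notin> boxes \<alpha> B'" using v c2 by (auto simp: boxes_def)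
      then have "\<not> ch q c" "\<not> t \<le> q" using bx qS by (auto simp: P_def)
      then have "nch q c" "q < t" using qS by (auto simp: nch_def)
      then have "q \<le> p" using pmax by blast
      then show False using q by simp
    qed
    show False
    proof (cases "abq q = c - 1")
      case True
      have ql: "q < length \<alpha>"
      proof (rule ccontr)
        assume "\<not> q < length \<alpha>"
        then have "abq q = 0" by (simp add: ab_zero)
        then show False using True c2 by simp
      qed
      have "abq p \<le> abq q" using abp True by simp
      then have "B!p \<le> B!q" using R[of p q] q ql by blast
      then show False using Bq abp by simp
    next
      case False
      then have "abq q < c - 1" using abq by simp
      then have "(q, c - 1) \<in> boxes \<alpha> B'" using q v by (simp add: boxes_def)
      then have "ch q (c - 1)" using bx c2 by (auto simp: P_def)
      moreover have "(q, Suc (c - 1)) \<notin> S" using Bq c2 by (auto simp: S_iff)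
      ultimately have "c - 1 = M" by (rule last_ch)
      then show False using cM c2 by simp
    qed
  qed
  define B'' where "B'' = B'[p := c]"
  have st: "stepB c B' B''" unfolding stepB_def B''_def using c2 plen valp mx by auto
  have "abq p \<le> B'!p" using wf' plen by (simp add: WF_def)
  then have bx2: "boxes \<alpha> B'' = insert (p,c) (boxes \<alpha> B')"
    unfolding B''_def using boxes_upd[OF plen _ valp c2] by simp
  have "P c p = insert (p,c) (P c t)"
  proof (rule set_eqI)
    fix x :: "nat \<times> nat"
    obtain a b where x: "x = (a,b)" by fastforce
    show "x \<in> P c p \<longleftrightarrow> x \<in> insert (p,c) (P c t)"
    proof
      assume "x \<in> P c p"
      then have h: "(a,b) \<in> S" "ch a b \<or> c < b \<or> (b = c \<and> p \<le> a)" by (auto simp: P_def x)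
      show "x \<in> insert (p,c) (P c t)"
      proof (cases "ch a b \<or> c < b")
        case True then show ?thesis using h by (auto simp: P_def x)
      next
        case False
        then have bc: "b = c" "p \<le> a" "\<not> ch a c" using h by auto
        show ?thesis
        proof (cases "a = p")
          case True then show ?thesis using x bc by simp
        next
          case False
          then have "p < a" using bc by simp
          moreover have "nch a c" using h bc by (simp add: nch_def)
          ultimately have "t \<le> a" using pmax by fastforce
          then show ?thesis using h bc by (auto simp: P_def x)
        qed
      qed
    next
      assume "x \<in> insert (p,c) (P c t)"
      then show "x \<in> P c p" using pS pt by (auto simp: P_def x)
    qed
  qed
  moreover have "WF \<alpha> B''" using WF_step wf' st by blast
  ultimately show ?thesis using st bx2 bx by auto
qed

end

lemma stepsB_rep1: "stepsB (replicate m 1) X (X @ replicate m 1)"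
proof (induction m arbitrary: X)
  case 0 then show ?case by simp
next
  case (Suc m)
  have "stepB 1 X (X @ [1])" by (simp add: stepB_def)
  moreover have "stepsB (replicate m 1) (X @ [1]) ((X @ [1]) @ replicate m 1)" by (rule Suc.IH)
  ultimately show ?case by (auto simp: stepsB_Cons_iff replicate_app_Cons_same)
qed

lemma sorted_wrt_replicate: "R x x \<Longrightarrow> sorted_wrt R (replicate m x)"
  by (induction m) auto

context target begin

lemma phase_block:
  assumes c2: "2 \<le> c" and cM: "c \<le> M"
  shows "WF \<alpha> B' \<Longrightarrow> boxes \<alpha> B' = P c t \<Longrightarrow>
    \<exists>B'' m. stepsB (replicate m c) B' B'' \<and> boxes \<alpha> B'' = P c 0 \<and> WF \<alpha> B''"
proof (induction t arbitrary: B' rule: less_induct)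
  case (less t)
  show ?case
  proof (cases "\<exists>q. nch q c \<and> q < t")
    case True
    define Q where "Q = {q. nch q c \<and> q < t}"
    have fin: "finite Q" unfolding Q_def by (rule finite_subset[of _ "{..<t}"]) auto
    have ne: "Q \<noteq> {}" using True by (auto simp: Q_def)
    define p where "p = Max Q"
    have pin: "nch p c" "p < t" using Max_in[OF fin ne] by (auto simp: p_def Q_def)
    have pmax: "\<forall>q. nch q c \<and> q < t \<longrightarrow> q \<le> p" using Max_ge[OF fin] by (auto simp: p_def Q_def)
    obtain B1 where b1: "stepB c B' B1" "boxes \<alpha> B1 = P c p" "WF \<alpha> B1"
      using phase_step[OF c2 cM less.prems(1) less.prems(2) pin pmax] by blast
    obtain B'' m where b2: "stepsB (replicate m c) B1 B''" "boxes \<alpha> B'' = P c 0" "WF \<alpha> B''"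
      using less.IH[OF pin(2) b1(3) b1(2)] by blast
    have "stepsB (replicate (Suc m) c) B' B''" using b1(1) b2(1) by (auto simp: stepsB_Cons_iff)
    then show ?thesis using b2 by blast
  next
    case False
    have "P c t = P c 0"
      using False by (auto simp: P_def nch_def)
    then show ?thesis using less.prems by (intro exI[of _ B'] exI[of _ 0]) auto
  qed
qed

lemma P_shift: "P (Suc c) 0 = P c (length B)"
  by (auto simp: P_def S_iff)

lemma phase_all:
  "1 \<le> c \<Longrightarrow> c \<le> M \<Longrightarrow> WF \<alpha> B' \<Longrightarrow> boxes \<alpha> B' = P c (length B) \<Longrightarrow>
   \<exists>B'' ph. stepsB ph B' B'' \<and> boxes \<alpha> B'' = P 1 (length B) \<and> WF \<alpha> B'' \<and>
      sorted_wrt (\<ge>) ph \<and> (\<forall>x\<in>set ph. 2 \<le> x \<and> x \<le> c)"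
proof (induction c arbitrary: B')
  case 0 then show ?case by simp
next
  case (Suc c)
  show ?case
  proof (cases "c = 0")
    case True then show ?thesis using Suc.prems by (intro exI[of _ B'] exI[of _ "[]"]) auto
  next
    case False
    obtain B1 m where b1: "stepsB (replicate m (Suc c)) B' B1" "boxes \<alpha> B1 = P (Suc c) 0" "WF \<alpha> B1"
      using phase_block[of "Suc c" B' "length B"] Suc.prems False by auto
    have "boxes \<alpha> B1 = P c (length B)" using b1(2) P_shift by simp
    then obtain B'' ph where b2: "stepsB ph B1 B''" "boxes \<alpha> B'' = P 1 (length B)" "WF \<alpha> B''"
      "sorted_wrt (\<ge>) ph" "\<forall>x\<in>set ph. 2 \<le> x \<and> x \<le> c"
      using Suc.IH[of B1] Suc.prems b1(3) False by auto
    have "stepsB (replicate m (Suc c) @ ph) B' B''" using b1(1) b2(1) stepsB_append by blast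
    moreover have "sorted_wrt (\<ge>) (replicate m (Suc c) @ ph)"
      using b2(4,5) by (auto simp: sorted_wrt_append intro: sorted_wrt_replicate)
    moreover have "\<forall>x\<in>set (replicate m (Suc c) @ ph). 2 \<le> x \<and> x \<le> Suc c"
      using b2(5) False by auto
    ultimately show ?thesis using b2(2,3) by blast
  qed
qed

lemma final_block:
  assumes wf': "WF \<alpha> B'" and bx: "boxes \<alpha> B' = P 1 (length B)"
  shows "\<exists>m. stepsB (replicate m 1) B' B"
proof -
  define N1 where "N1 = length B'"
  have sub: "boxes \<alpha> B' \<subseteq> S" using bx P_sub by simp
  have N1a: "length \<alpha> \<le> N1" using wf' by (simp add: WF_def N1_def)
  have pos': "\<And>q. q < N1 \<Longrightarrow> length \<alpha> \<le> q \<Longrightarrow> (q,1) \<in> boxes \<alpha> B'"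
    using wf' ab_zero by (auto simp: WF_def boxes_def N1_def)
  have N1b: "N1 \<le> length B"
  proof (rule ccontr)
    assume "\<not> N1 \<le> length B"
    then have "(length B, 1) \<in> boxes \<alpha> B'" using pos' lenB by simp
    then show False using sub by (auto simp: S_iff)
  qed
  have eq: "\<And>q. q < N1 \<Longrightarrow> B'!q = B!q"
  proof -
    fix q assume q: "q < N1"
    have qB: "q < length B" using q N1b by simp
    have rows: "\<And>j. (q,j) \<in> boxes \<alpha> B' \<longleftrightarrow> (q,j) \<in> S"
    proof
      fix j assume "(q,j) \<in> boxes \<alpha> B'" then show "(q,j) \<in> S" using sub by blast
    next
      fix j assume jS: "(q,j) \<in> S"
      show "(q,j) \<in> boxes \<alpha> B'"
      proof (cases "j = 1")
        case True
        then have "length \<alpha> \<le> q" using jS col1 by simp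
        then show ?thesis using pos' q True by simp
      next
        case False
        then have "1 < j" using jS S_col_pos by fastforce
        then show ?thesis using bx jS by (simp add: P_def)
      qed
    qed
    have a1: "abq q \<le> B'!q" using wf' q by (simp add: WF_def N1_def)
    have a2: "abq q \<le> B!q" using B_ge qB by simp
    show "B'!q = B!q"
    proof (rule ccontr)
      assume ne: "B'!q \<noteq> B!q"
      then consider "B'!q < B!q" | "B!q < B'!q" by linarith
      then show False
      proof cases
        case 1
        then have "(q, B!q) \<in> S" using a1 qB by (auto simp: S_iff)
        then have "(q, B!q) \<in> boxes \<alpha> B'" using rows by blast
        then show False using 1 by (simp add: boxes_def)
      next
        case 2
        then have "(q, B'!q) \<in> boxes \<alpha> B'" using a2 q by (auto simp: boxes_def N1_def)
        then have "(q, B'!q) \<in> S" using rows by blast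
        then show False using 2 by (simp add: S_iff)
      qed
    qed
  qed
  have one: "\<And>q. N1 \<le> q \<Longrightarrow> q < length B \<Longrightarrow> B!q = 1"
  proof -
    fix q assume q: "N1 \<le> q" "q < length B"
    have "length \<alpha> \<le> q" using q N1a by simp
    then have ab0: "abq q = 0" by (simp add: ab_zero)
    show "B!q = 1"
    proof (rule ccontr)
      assume "B!q \<noteq> 1"
      moreover have "1 \<le> B!q" using B_ge q(2) by blast
      ultimately have "2 \<le> B!q" by linarith
      then have "(q,2) \<in> S" using ab0 q by (auto simp: S_iff)
      then have "(q,2) \<in> boxes \<alpha> B'" using bx by (simp add: P_def)
      then show False using q by (simp add: boxes_def N1_def)
    qed
  qed
  have "B = B' @ replicate (length B - N1) 1"
  proof (rule nth_equalityI)
    show "length B = length (B' @ replicate (length B - N1) 1)" using N1b by (simp add: N1_def)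
  next
    fix i assume "i < length B"
    then show "B!i = (B' @ replicate (length B - N1) 1)!i"
      using eq one by (cases "i < N1") (auto simp: nth_append N1_def)
  qed
  then show ?thesis using stepsB_rep1[of "length B - N1" B'] by metis
qed

lemma supset_core:
  "\<exists>ds ph. stepsB (ds @ ph) (rev \<alpha>) B \<and> ds \<noteq> [] \<and> sorted_wrt (<) ds \<and> sorted_wrt (\<ge>) ph \<and>
      (\<forall>x\<in>set ph. 1 \<le> x \<and> x \<le> last ds) \<and> (\<forall>x\<in>set ds. 1 \<le> x)"
proof -
  obtain ds where ds: "sorted_wrt (<) ds" "set ds = D"
    using ex1_sorted_list_for_set_if_finite[OF finD] by blast
  have wf0: "WF \<alpha> (rev \<alpha>)" using WF_init comp .
  have b0: "boxes \<alpha> (rev \<alpha>) = T {}" using boxes_init by (simp add: T_def)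
  obtain B1 where b1: "stepsB ds (rev \<alpha>) B1" "boxes \<alpha> B1 = T ({} \<union> set ds)" "WF \<alpha> B1"
    using chain_list[OF ds(1) _ _ _ wf0 b0] ds(2) by auto
  have "T D = P M (length B)"
  proof (rule set_eqI)
    fix x :: "nat \<times> nat"
    obtain a b where x: "x = (a,b)" by fastforce
    show "x \<in> T D \<longleftrightarrow> x \<in> P M (length B)"
    proof
      assume "x \<in> T D" then show "x \<in> P M (length B)" using ch_S by (auto simp: T_def P_def x)
    next
      assume "x \<in> P M (length B)"
      then have h: "(a,b) \<in> S" "ch a b \<or> M < b \<or> (b = M \<and> length B \<le> a)" by (auto simp: P_def x)
      have "\<not> M < b" using M_ge[OF h(1)] by simp
      moreover have "a < length B" using h(1) by (simp add: S_iff)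
      ultimately have "ch a b" using h(2) by auto
      then show "x \<in> T D" by (auto simp: T_def x ch_def)
    qed
  qed
  then have bx1: "boxes \<alpha> B1 = P M (length B)" using b1(2) ds(2) by simp
  have M1: "1 \<le> M" using D_bounds M_D by blast
  obtain B2 ph where b2: "stepsB ph B1 B2" "boxes \<alpha> B2 = P 1 (length B)" "WF \<alpha> B2"
      "sorted_wrt (\<ge>) ph" "\<forall>x\<in>set ph. 2 \<le> x \<and> x \<le> M"
    using phase_all[OF M1 order_refl b1(3) bx1] by blast
  obtain m where b3: "stepsB (replicate m 1) B2 B" using final_block[OF b2(3) b2(2)] by blast
  define ph' where "ph' = ph @ replicate m 1"
  have st: "stepsB (ds @ ph') (rev \<alpha>) B"
    unfolding ph'_def using b1(1) b2(1) b3 stepsB_append by blast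
  have dsne: "ds \<noteq> []" using ds(2) M_D by auto
  have lastM: "last ds = M"
  proof -
    have "last ds \<in> D" using dsne ds(2) last_in_set by blast
    then have "last ds \<le> M" using D_bounds by blast
    moreover have "M \<le> last ds"
    proof -
      obtain i where i: "i < length ds" "ds!i = M" using M_D ds(2) by (metis in_set_conv_nth)
      show ?thesis
      proof (cases "i = length ds - 1")
        case True then show ?thesis using i dsne by (simp add: last_conv_nth)
      next
        case False
        then have "i < length ds - 1" using i by simp
        then have "ds!i < ds!(length ds - 1)" using sorted_wrt_nth_less[OF ds(1), of i "length ds - 1"] dsne by simp
        then show ?thesis using i dsne by (simp add: last_conv_nth)
      qed
    qed
    ultimately show ?thesis by simp
  qed
  have "sorted_wrt (\<ge>) ph'" using b2(4,5) by (auto simp: ph'_def sorted_wrt_append intro: sorted_wrt_replicate)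
  moreover have "\<forall>x\<in>set ph'. 1 \<le> x \<and> x \<le> last ds" using b2(5) lastM M1 by (auto simp: ph'_def)
  moreover have "\<forall>x\<in>set ds. 1 \<le> x" using ds(2) D_bounds by blast
  ultimately show ?thesis using st dsne ds(1) by blast
qed

end

lemma skew_iff:
  assumes len: "length \<alpha> \<le> length \<beta>"
  shows "(i,j) \<in> skew \<beta> \<alpha> \<longleftrightarrow> 1 \<le> i \<and> i \<le> length \<beta> \<and> (length \<beta> - i, j) \<in> boxes \<alpha> (rev \<beta>)"
proof -
  define N where "N = length \<beta>"
  define k where "k = length \<alpha>"
  have kN: "k \<le> N" using len by (simp add: N_def k_def)
  have inner: "(i,j) \<in> inner_shape \<beta> \<alpha> \<longleftrightarrow> N - k < i \<and> i \<le> N \<and> 1 \<le> j \<and> j \<le> \<alpha>!(i - (N - k) - 1)"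
  proof
    assume "(i,j) \<in> inner_shape \<beta> \<alpha>"
    then obtain i0 j0 where h: "(i,j) = (N - k + i0, j0)" "1 \<le> i0" "i0 \<le> k" "1 \<le> j0" "j0 \<le> \<alpha>!(i0 - 1)"
      unfolding inner_shape_def N_def k_def mem_Collect_eq by blast
    then have "i = N - k + i0" "j = j0" by auto
    moreover have "i - (N - k) - 1 = i0 - 1" using \<open>i = N - k + i0\<close> by simp
    moreover have "N - k < i" "i \<le> N" using \<open>i = N - k + i0\<close> h(2,3) kN by arith+
    ultimately show "N - k < i \<and> i \<le> N \<and> 1 \<le> j \<and> j \<le> \<alpha>!(i - (N - k) - 1)"
      using h(2-5) kN by simp
  next
    assume h: "N - k < i \<and> i \<le> N \<and> 1 \<le> j \<and> j \<le> \<alpha>!(i - (N - k) - 1)"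
    define i0 where "i0 = i - (N - k)"
    have i0: "i = N - k + i0" "1 \<le> i0" "i0 \<le> k" "j \<le> \<alpha>!(i0 - 1)" using h kN by (auto simp: i0_def)
    have "\<exists>a b. (i,j) = (N - k + a, b) \<and> 1 \<le> a \<and> a \<le> k \<and> 1 \<le> b \<and> b \<le> \<alpha>!(a - 1)"
      using i0 h by blast
    then show "(i,j) \<in> inner_shape \<beta> \<alpha>" unfolding inner_shape_def N_def k_def mem_Collect_eq by blast
  qed
  have diag: "(i,j) \<in> diagram \<beta> \<longleftrightarrow> 1 \<le> i \<and> i \<le> N \<and> 1 \<le> j \<and> j \<le> \<beta>!(i - 1)"
    by (simp add: diagram_def N_def)
  show ?thesis
  proof (cases "1 \<le> i \<and> i \<le> N")
    case False
    then show ?thesis unfolding skew_def using diag N_def by auto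
  next
    case True
    have iN: "1 \<le> i" "i \<le> N" using True by auto
    define q where "q = N - i"
    have q: "q < N" using True by (simp add: q_def)
    have bq: "rev \<beta> ! q = \<beta>!(i - 1)" using True q by (simp add: rev_nth N_def q_def Suc_diff_Suc)
    have abq: "ab \<alpha> q = (if N - k < i then \<alpha>!(i - (N - k) - 1) else 0)"
    proof (cases "N - k < i")
      case True
      then have "q < k" using iN kN unfolding q_def by arith
      moreover have "k - Suc q = i - (N - k) - 1" using True iN kN unfolding q_def by arith
      ultimately show ?thesis using True by (simp add: ab_def rev_nth k_def)
    next
      case False
      then have "\<not> q < k" using iN kN unfolding q_def by arith
      then show ?thesis using False by (simp add: ab_def k_def)
    qed
    have bx: "(q,j) \<in> boxes \<alpha> (rev \<beta>) \<longleftrightarrow> ab \<alpha> q < j \<and> j \<le> \<beta>!(i - 1)"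
      using q bq by (simp add: boxes_def N_def)
    have sk: "(i,j) \<in> skew \<beta> \<alpha> \<longleftrightarrow> (1 \<le> j \<and> j \<le> \<beta>!(i - 1)) \<and>
        \<not> (N - k < i \<and> 1 \<le> j \<and> j \<le> \<alpha>!(i - (N - k) - 1))"
      unfolding skew_def using diag inner True by blast
    have "(i,j) \<in> skew \<beta> \<alpha> \<longleftrightarrow> (q,j) \<in> boxes \<alpha> (rev \<beta>)"
    proof (cases "N - k < i")
      case c: True
      have "ab \<alpha> q = \<alpha>!(i - (N - k) - 1)" using abq c by simp
      then show ?thesis unfolding sk bx using c by auto
    next
      case c: False
      have "ab \<alpha> q = 0" using abq c by simp
      then show ?thesis unfolding sk bx using c by auto
    qed
    then show ?thesis using True by (simp add: q_def N_def)
  qed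
qed

lemma boxes_iff_skew:
  assumes len: "length \<alpha> \<le> length \<beta>"
  shows "(q,j) \<in> boxes \<alpha> (rev \<beta>) \<longleftrightarrow> q < length \<beta> \<and> (length \<beta> - q, j) \<in> skew \<beta> \<alpha>"
proof -
  have "(q,j) \<in> boxes \<alpha> (rev \<beta>) \<Longrightarrow> q < length \<beta>" by (simp add: boxes_def)
  then show ?thesis using skew_iff[OF len, of "length \<beta> - q" j] by auto
qed

lemma skew_image:
  assumes len: "length \<alpha> \<le> length \<beta>"
  shows "skew \<beta> \<alpha> = (\<lambda>(q,j). (length \<beta> - q, j)) ` boxes \<alpha> (rev \<beta>)"
proof (rule set_eqI)
  fix x :: "nat \<times> nat"
  obtain i j where x: "x = (i,j)" by fastforce
  show "x \<in> skew \<beta> \<alpha> \<longleftrightarrow> x \<in> (\<lambda>(q,j). (length \<beta> - q, j)) ` boxes \<alpha> (rev \<beta>)"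
  proof
    assume "x \<in> skew \<beta> \<alpha>"
    then have h: "1 \<le> i" "i \<le> length \<beta>" "(length \<beta> - i, j) \<in> boxes \<alpha> (rev \<beta>)"
      using skew_iff[OF len] x by auto
    then show "x \<in> (\<lambda>(q,j). (length \<beta> - q, j)) ` boxes \<alpha> (rev \<beta>)"
      using x by (intro rev_image_eqI[OF h(3)]) auto
  next
    assume "x \<in> (\<lambda>(q,j). (length \<beta> - q, j)) ` boxes \<alpha> (rev \<beta>)"
    then obtain q where q: "(q,j) \<in> boxes \<alpha> (rev \<beta>)" "i = length \<beta> - q" using x by auto
    then show "x \<in> skew \<beta> \<alpha>" using boxes_iff_skew[OF len] x by auto
  qed
qed

lemma card_skew:
  assumes len: "length \<alpha> \<le> length \<beta>"
  shows "card (skew \<beta> \<alpha>) = card (boxes \<alpha> (rev \<beta>))"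
proof -
  have "inj_on (\<lambda>(q,j). (length \<beta> - q, j)) (boxes \<alpha> (rev \<beta>))"
    by (auto simp: inj_on_def boxes_def)
  then show ?thesis using skew_image[OF len] by (simp add: card_image)
qed

lemma supp_skew:
  assumes len: "length \<alpha> \<le> length \<beta>"
  shows "supp (skew \<beta> \<alpha>) = snd ` boxes \<alpha> (rev \<beta>)"
  unfolding supp_def skew_image[OF len] by force

lemma nc_conds_iff:
  assumes len: "length \<alpha> \<le> length \<beta>"
  shows "((\<forall>i. (i, 1) \<in> skew \<beta> \<alpha> \<and> (i, 2) \<in> skew \<beta> \<alpha> \<longrightarrow> (\<forall>i'. (i', 1) \<in> skew \<beta> \<alpha> \<longrightarrow> i' \<le> i)) \<and>
     (\<forall>i j. 2 \<le> j \<and> (i, j) \<in> skew \<beta> \<alpha> \<and> (i, Suc j) \<in> skew \<beta> \<alpha> \<longrightarrow> (\<forall>i'. (i', j) \<in> skew \<beta> \<alpha> \<longrightarrow> i \<le> i')))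
    \<longleftrightarrow> ncB (boxes \<alpha> (rev \<beta>))" (is "?L \<longleftrightarrow> ?R")
proof
  assume L: ?L
  note l1 = conjunct1[OF L, rule_format]
  note l2 = conjunct2[OF L, rule_format]
  show ?R unfolding ncB_def
  proof (intro conjI allI impI)
    fix q q' assume a: "(q,1) \<in> boxes \<alpha> (rev \<beta>) \<and> (q,2) \<in> boxes \<alpha> (rev \<beta>) \<and> (q',1) \<in> boxes \<alpha> (rev \<beta>)"
    then have h: "q < length \<beta>" "q' < length \<beta>" "(length \<beta> - q, 1) \<in> skew \<beta> \<alpha>"
      "(length \<beta> - q, 2) \<in> skew \<beta> \<alpha>" "(length \<beta> - q', 1) \<in> skew \<beta> \<alpha>"
      using boxes_iff_skew[OF len] by auto
    have "length \<beta> - q' \<le> length \<beta> - q" using l1[OF conjI[OF h(3) h(4)] h(5)] .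
    then show "q \<le> q'" using h(1,2) by linarith
  next
    fix q j q' assume a: "2 \<le> j \<and> (q,j) \<in> boxes \<alpha> (rev \<beta>) \<and> (q,Suc j) \<in> boxes \<alpha> (rev \<beta>) \<and> (q',j) \<in> boxes \<alpha> (rev \<beta>)"
    then have h: "q < length \<beta>" "q' < length \<beta>" "(length \<beta> - q, j) \<in> skew \<beta> \<alpha>"
      "(length \<beta> - q, Suc j) \<in> skew \<beta> \<alpha>" "(length \<beta> - q', j) \<in> skew \<beta> \<alpha>" "2 \<le> j"
      using boxes_iff_skew[OF len] by auto
    have "length \<beta> - q \<le> length \<beta> - q'" using l2[OF conjI[OF h(6) conjI[OF h(3) h(4)]] h(5)] .
    then show "q' \<le> q" using h(1,2) by linarith
  qed
next
  assume R: ?R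
  note r1 = conjunct1[OF R[unfolded ncB_def], rule_format]
  note r2 = conjunct2[OF R[unfolded ncB_def], rule_format]
  show ?L
  proof (intro conjI allI impI)
    fix i i' assume a: "(i, 1) \<in> skew \<beta> \<alpha> \<and> (i, 2) \<in> skew \<beta> \<alpha>" "(i', 1) \<in> skew \<beta> \<alpha>"
    then have h: "1 \<le> i" "i \<le> length \<beta>" "1 \<le> i'" "i' \<le> length \<beta>"
      "(length \<beta> - i, 1) \<in> boxes \<alpha> (rev \<beta>)" "(length \<beta> - i, 2) \<in> boxes \<alpha> (rev \<beta>)"
      "(length \<beta> - i', 1) \<in> boxes \<alpha> (rev \<beta>)" using skew_iff[OF len] by auto
    have "length \<beta> - i \<le> length \<beta> - i'" using r1[OF conjI[OF h(5) conjI[OF h(6) h(7)]]] .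
    then show "i' \<le> i" using h(1-4) by linarith
  next
    fix i j i' assume a: "2 \<le> j \<and> (i, j) \<in> skew \<beta> \<alpha> \<and> (i, Suc j) \<in> skew \<beta> \<alpha>" "(i', j) \<in> skew \<beta> \<alpha>"
    then have h: "1 \<le> i" "i \<le> length \<beta>" "1 \<le> i'" "i' \<le> length \<beta>"
      "(length \<beta> - i, j) \<in> boxes \<alpha> (rev \<beta>)" "(length \<beta> - i, Suc j) \<in> boxes \<alpha> (rev \<beta>)"
      "(length \<beta> - i', j) \<in> boxes \<alpha> (rev \<beta>)" "2 \<le> j" using skew_iff[OF len] by auto
    have "length \<beta> - i' \<le> length \<beta> - i"
      using r2[OF conjI[OF h(8) conjI[OF h(5) conjI[OF h(6) h(7)]]]] .
    then show "i \<le> i'" using h(1-4) by linarith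
  qed
qed

lemma interval_iff:
  assumes fin: "finite A" and ne: "A \<noteq> {}"
  shows "(\<forall>a b c. a \<in> A \<and> c \<in> A \<and> a \<le> b \<and> b \<le> c \<longrightarrow> b \<in> A) \<longleftrightarrow> A = {Min A .. Max A}"
proof
  assume h: "\<forall>a b c. a \<in> A \<and> c \<in> A \<and> a \<le> b \<and> b \<le> c \<longrightarrow> b \<in> A"
  have mi: "Min A \<in> A" and ma: "Max A \<in> A" using fin ne by auto
  show "A = {Min A .. Max A}"
  proof
    show "A \<subseteq> {Min A .. Max A}" using fin by (auto intro: Min_le Max_ge)
    show "{Min A .. Max A} \<subseteq> A"
    proof
      fix b assume "b \<in> {Min A .. Max A}"
      then have "Min A \<le> b" "b \<le> Max A" by auto
      then show "b \<in> A" using h mi ma by blast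
    qed
  qed
next
  assume eq: "A = {Min A .. Max A}"
  show "\<forall>a b c. a \<in> A \<and> c \<in> A \<and> a \<le> b \<and> b \<le> c \<longrightarrow> b \<in> A"
  proof (intro allI impI)
    fix a b c assume h: "a \<in> A \<and> c \<in> A \<and> a \<le> b \<and> b \<le> c"
    have "a \<in> {Min A .. Max A}" "c \<in> {Min A .. Max A}" using h eq by blast+
    then have "b \<in> {Min A .. Max A}" using h by auto
    then show "b \<in> A" using eq by blast
  qed
qed

lemma box_op_cover:
  assumes "box_op x (Some \<gamma>) = Some \<delta>"
  shows "comp_cover \<gamma> \<delta>"
proof (cases "x = 1")
  case True then show ?thesis using assms by (simp add: box_op_def comp_cover_def)
next
  case False
  then have x2: "x \<noteq> 0" "x \<noteq> 1" using assms by (auto simp: box_op_def split: if_splits)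
  then have "incr_first (x - 1) \<gamma> = Some \<delta>" using assms by (simp add: box_op_def)
  from incr_first_SomeD[OF this] obtain i where i: "i < length \<gamma>" "\<gamma>!i = x - 1"
    "\<forall>j<i. \<gamma>!j \<noteq> x - 1" "\<delta> = \<gamma>[i := Suc (x - 1)]" by blast
  then have "\<delta> = \<gamma>[i := \<gamma>!i + 1] \<and> (\<forall>j<i. \<gamma>!j \<noteq> \<gamma>!i)" by simp
  then show ?thesis using i(1) unfolding comp_cover_def by blast
qed

lemma foldr_comp_less:
  "foldr box_op w (Some \<alpha>) = Some \<beta> \<Longrightarrow> w \<noteq> [] \<Longrightarrow> comp_less \<alpha> \<beta>"
proof (induction w arbitrary: \<beta>)
  case Nil then show ?case by simp
next
  case (Cons x w)
  obtain \<beta>' where b1: "foldr box_op w (Some \<alpha>) = Some \<beta>'"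
    using Cons.prems by (cases "foldr box_op w (Some \<alpha>)") auto
  then have b2: "box_op x (Some \<beta>') = Some \<beta>" using Cons.prems by simp
  have cv: "comp_cover \<beta>' \<beta>" using box_op_cover[OF b2] .
  show ?case
  proof (cases "w = []")
    case True
    then have "\<beta>' = \<alpha>" using b1 by simp
    then show ?thesis using cv by (simp add: comp_less_def)
  next
    case False
    then have "comp_less \<alpha> \<beta>'" using Cons.IH b1 by blast
    then show ?thesis using cv unfolding comp_less_def by (rule tranclp.trancl_into_trancl)
  qed
qed

definition Good :: "nat list \<Rightarrow> nat list \<Rightarrow> bool" where
  "Good \<alpha> \<beta> \<longleftrightarrow> is_composition \<beta> \<and> WF \<alpha> (rev \<beta>) \<and>
     (\<forall>q q'. q < q' \<longrightarrow> q' < length \<alpha> \<longrightarrow> ab \<alpha> q \<le> ab \<alpha> q' \<longrightarrow> rev \<beta> ! q \<le> rev \<beta> ! q')"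

lemma Good_init: "is_composition \<alpha> \<Longrightarrow> Good \<alpha> \<alpha>"
  using WF_init by (auto simp: Good_def ab_def)

lemma Good_cover:
  assumes g: "Good \<alpha> \<gamma>" and cv: "comp_cover \<gamma> \<delta>"
  shows "Good \<alpha> \<delta>"
proof -
  have comp: "is_composition \<gamma>" and wf: "WF \<alpha> (rev \<gamma>)"
    and R: "\<And>q q'. q < q' \<Longrightarrow> q' < length \<alpha> \<Longrightarrow> ab \<alpha> q \<le> ab \<alpha> q' \<Longrightarrow> rev \<gamma> ! q \<le> rev \<gamma> ! q'"
    using g unfolding Good_def by blast+
  have la: "length \<alpha> \<le> length \<gamma>" using wf by (simp add: WF_def)
  consider (new) "\<delta> = 1 # \<gamma>" | (inc) k where "k < length \<gamma>" "\<delta> = \<gamma>[k := \<gamma>!k + 1]" "\<forall>i<k. \<gamma>!i \<noteq> \<gamma>!k"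
    using cv unfolding comp_cover_def by blast
  then show ?thesis
  proof cases
    case new
    have rv: "rev \<delta> = rev \<gamma> @ [1]" using new by simp
    have "is_composition \<delta>" using comp new by (simp add: is_composition_def)
    moreover have "WF \<alpha> (rev \<delta>)" using wf rv la
      by (auto simp: WF_def nth_append ab_def less_Suc_eq)
    moreover have "\<forall>q q'. q < q' \<longrightarrow> q' < length \<alpha> \<longrightarrow> ab \<alpha> q \<le> ab \<alpha> q' \<longrightarrow> rev \<delta> ! q \<le> rev \<delta> ! q'"
      using R rv la by (auto simp: nth_append)
    ultimately show ?thesis by (simp add: Good_def)
  next
    case inc
    define q0 where "q0 = length \<gamma> - k - 1"
    have q0: "q0 < length \<gamma>" using inc by (simp add: q0_def)
    have rv: "rev \<delta> = (rev \<gamma>)[q0 := rev \<gamma> ! q0 + 1]"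
      using inc by (simp add: rev_update q0_def rev_nth Suc_diff_Suc)
    have above: "\<And>q'. q0 < q' \<Longrightarrow> q' < length \<gamma> \<Longrightarrow> rev \<gamma> ! q' \<noteq> rev \<gamma> ! q0"
    proof -
      fix q' assume a: "q0 < q'" "q' < length \<gamma>"
      have "length \<gamma> - Suc q' < k" using a inc(1) by (simp add: q0_def)
      then have "\<gamma> ! (length \<gamma> - Suc q') \<noteq> \<gamma>!k" using inc(3) by blast
      moreover have "rev \<gamma> ! q0 = \<gamma> ! k" using inc(1) by (simp add: q0_def rev_nth Suc_diff_Suc)
      ultimately show "rev \<gamma> ! q' \<noteq> rev \<gamma> ! q0" using a by (simp add: rev_nth)
    qed
    have val: "\<And>q. rev \<delta> ! q = (if q = q0 then rev \<gamma> ! q0 + 1 else rev \<gamma> ! q)"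
      using rv q0 by simp
    have "is_composition \<delta>" using comp inc unfolding is_composition_def
      by (auto simp: set_update_subset_insert[THEN subsetD] dest: set_update_subset_insert[THEN subsetD])
    moreover have "WF \<alpha> (rev \<delta>)"
    proof -
      have "length (rev \<delta>) = length (rev \<gamma>)" using inc by simp
      moreover have "\<forall>q<length (rev \<gamma>). ab \<alpha> q \<le> rev \<gamma> ! q \<and> 1 \<le> rev \<gamma> ! q" using wf by (simp add: WF_def)
      ultimately show ?thesis using wf unfolding WF_def using val
        by (metis le_SucI Suc_eq_plus1)
    qed
    moreover have "\<forall>q q'. q < q' \<longrightarrow> q' < length \<alpha> \<longrightarrow> ab \<alpha> q \<le> ab \<alpha> q' \<longrightarrow> rev \<delta> ! q \<le> rev \<delta> ! q'"
    proof (intro allI impI)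
      fix q q' assume a: "q < q'" "q' < length \<alpha>" "ab \<alpha> q \<le> ab \<alpha> q'"
      have r: "rev \<gamma> ! q \<le> rev \<gamma> ! q'" using R a by blast
      show "rev \<delta> ! q \<le> rev \<delta> ! q'"
      proof (cases "q = q0")
        case True
        then have "rev \<gamma> ! q' \<noteq> rev \<gamma> ! q0" using above a la by simp
        then show ?thesis using True val r a by auto
      next
        case False then show ?thesis using val r by auto
      qed
    qed
    ultimately show ?thesis by (simp add: Good_def)
  qed
qed

lemma comp_less_Good:
  assumes "is_composition \<alpha>" "comp_less \<alpha> \<beta>" shows "Good \<alpha> \<beta>"
proof -
  have "comp_cover\<^sup>+\<^sup>+ \<alpha> \<beta>" using assms(2) by (simp add: comp_less_def)
  then show ?thesis
  proof (induction rule: tranclp_induct)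
    case (base y) then show ?case using Good_cover Good_init assms(1) by blast
  next
    case (step y z) then show ?case using Good_cover by blast
  qed
qed

theorem mainTheorem11:
  fixes \<alpha> :: "nat list" and n :: nat
  assumes "is_composition \<alpha>" and "1 \<le> n"
  shows "{\<beta>. \<exists>w \<in> CRHW n. word_act w \<alpha> = Some \<beta>}
       = {\<beta>. comp_less \<alpha> \<beta> \<and> nc_border_strip (skew \<beta> \<alpha>) \<and> card (skew \<beta> \<alpha>) = n}"
proof (rule set_eqI)
  fix \<beta>
  show "\<beta> \<in> {\<beta>. \<exists>w \<in> CRHW n. word_act w \<alpha> = Some \<beta>} \<longleftrightarrow>
        \<beta> \<in> {\<beta>. comp_less \<alpha> \<beta> \<and> nc_border_strip (skew \<beta> \<alpha>) \<and> card (skew \<beta> \<alpha>) = n}"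
  proof
    assume "\<beta> \<in> {\<beta>. \<exists>w \<in> CRHW n. word_act w \<alpha> = Some \<beta>}"
    then obtain w where w: "length w = n" "reverse_hookword w" "connected_word w" "word_act w \<alpha> = Some \<beta>"
      by (auto simp: CRHW_def)
    have core: "ncB (boxes \<alpha> (rev \<beta>))" "card (boxes \<alpha> (rev \<beta>)) = length w"
      "snd ` boxes \<alpha> (rev \<beta>) = set w" "WF \<alpha> (rev \<beta>)"
      using subset_core[OF assms(1) w(4) w(2)] by auto
    have len: "length \<alpha> \<le> length \<beta>" using core(4) by (simp add: WF_def)
    have wne: "w \<noteq> []" using w(1) assms(2) by auto
    have cl: "comp_less \<alpha> \<beta>" using foldr_comp_less w(4) wne unfolding word_act_def by blast
    have cd: "card (skew \<beta> \<alpha>) = n" using card_skew[OF len] core(2) w(1) by simp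
    have sp: "supp (skew \<beta> \<alpha>) = set w" using supp_skew[OF len] core(3) by simp
    have cw: "set w = {Min (set w)..Max (set w)}" using w(3) unfolding connected_word_def .
    have "set w \<noteq> {}" using wne by simp
    then have "\<forall>a b c. a \<in> set w \<and> c \<in> set w \<and> a \<le> b \<and> b \<le> c \<longrightarrow> b \<in> set w"
      using iffD2[OF interval_iff[OF finite_set] cw] by blast
    then have "interval_shape (skew \<beta> \<alpha>)"
      unfolding interval_shape_def sp .
    moreover have "(\<forall>i. (i, 1) \<in> skew \<beta> \<alpha> \<and> (i, 2) \<in> skew \<beta> \<alpha> \<longrightarrow> (\<forall>i'. (i', 1) \<in> skew \<beta> \<alpha> \<longrightarrow> i' \<le> i)) \<and>
     (\<forall>i j. 2 \<le> j \<and> (i, j) \<in> skew \<beta> \<alpha> \<and> (i, Suc j) \<in> skew \<beta> \<alpha> \<longrightarrow> (\<forall>i'. (i', j) \<in> skew \<beta> \<alpha> \<longrightarrow> i \<le> i'))"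
      using nc_conds_iff[OF len] core(1) by blast
    ultimately have "nc_border_strip (skew \<beta> \<alpha>)" unfolding nc_border_strip_def by blast
    then show "\<beta> \<in> {\<beta>. comp_less \<alpha> \<beta> \<and> nc_border_strip (skew \<beta> \<alpha>) \<and> card (skew \<beta> \<alpha>) = n}"
      using cl cd by simp
  next
    assume "\<beta> \<in> {\<beta>. comp_less \<alpha> \<beta> \<and> nc_border_strip (skew \<beta> \<alpha>) \<and> card (skew \<beta> \<alpha>) = n}"
    then have h: "comp_less \<alpha> \<beta>" "nc_border_strip (skew \<beta> \<alpha>)" "card (skew \<beta> \<alpha>) = n" by auto
    have g: "Good \<alpha> \<beta>" using comp_less_Good[OF assms(1) h(1)] .
    have wf: "WF \<alpha> (rev \<beta>)" using g by (simp add: Good_def)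
    have len: "length \<alpha> \<le> length \<beta>" using wf by (simp add: WF_def)
    have ncb: "ncB (boxes \<alpha> (rev \<beta>))"
      using h(2) nc_conds_iff[OF len] unfolding nc_border_strip_def by blast
    have cdb: "card (boxes \<alpha> (rev \<beta>)) = n" using card_skew[OF len] h(3) by simp
    have neb: "boxes \<alpha> (rev \<beta>) \<noteq> {}" using cdb assms(2) by auto
    interpret target \<alpha> "rev \<beta>"
    proof
      show "is_composition \<alpha>" by (rule assms(1))
      show "WF \<alpha> (rev \<beta>)" by (rule wf)
      show "\<And>q q'. q < q' \<Longrightarrow> q' < length \<alpha> \<Longrightarrow> ab \<alpha> q \<le> ab \<alpha> q' \<Longrightarrow> rev \<beta> ! q \<le> rev \<beta> ! q'"
        using g unfolding Good_def by blast
      show "ncB (boxes \<alpha> (rev \<beta>))" by (rule ncb)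
      show "boxes \<alpha> (rev \<beta>) \<noteq> {}" by (rule neb)
    qed
    obtain ds ph where sc: "stepsB (ds @ ph) (rev \<alpha>) (rev \<beta>)" "ds \<noteq> []" "sorted_wrt (<) ds"
      "sorted_wrt (\<ge>) ph" "\<forall>x\<in>set ph. 1 \<le> x \<and> x \<le> last ds" "\<forall>x\<in>set ds. 1 \<le> x"
      using supset_core by blast
    define w where "w = rev ph @ rev ds"
    have rw: "rev w = ds @ ph" by (simp add: w_def)
    have wa: "word_act w \<alpha> = Some \<beta>"
      using stepsB_foldr[of w \<alpha> "rev \<beta>"] sc(1) rw by (simp add: word_act_def)
    have "reverse_hookword w"
      unfolding rhw_iff
    proof (intro conjI)
      show "\<forall>x\<in>set w. 1 \<le> x" using sc(5,6) by (auto simp: w_def)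
      have "sorted (rev ph)" using sc(4) by (simp add: sorted_wrt_rev)
      moreover have "sorted_wrt (>) (rev ds)" using sc(3) by (simp add: sorted_wrt_rev)
      moreover have "hd (rev ds) = last ds" using sc(2) by (simp add: hd_rev)
      moreover have "rev ds \<noteq> []" using sc(2) by simp
      moreover have "\<forall>x\<in>set (rev ph). x \<le> hd (rev ds)" using sc(5) \<open>hd (rev ds) = last ds\<close> by simp
      ultimately show "\<exists>xs ys. w = xs @ ys \<and> ys \<noteq> [] \<and> sorted xs \<and> sorted_wrt (>) ys \<and> (\<forall>x\<in>set xs. x \<le> hd ys)"
        unfolding w_def by blast
    qed
    moreover have stb: "card (boxes \<alpha> (rev \<beta>)) = length w \<and> snd ` boxes \<alpha> (rev \<beta>) = set w"
      using steps_boxes[OF WF_init[OF assms(1)] sc(1)] boxes_init rw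
      by (auto simp: w_def)
    moreover have "connected_word w"
    proof -
      have sp: "supp (skew \<beta> \<alpha>) = set w" using supp_skew[OF len] stb by simp
      have "interval_shape (skew \<beta> \<alpha>)" using h(2) by (simp add: nc_border_strip_def)
      then have int: "\<forall>a b c. a \<in> set w \<and> c \<in> set w \<and> a \<le> b \<and> b \<le> c \<longrightarrow> b \<in> set w"
        unfolding interval_shape_def sp .
      have ne: "set w \<noteq> {}" using sc(2) by (simp add: w_def)
      have "set w = {Min (set w)..Max (set w)}" using iffD1[OF interval_iff[OF finite_set ne] int] .
      then show ?thesis unfolding connected_word_def .
    qed
    ultimately have "w \<in> CRHW n" using cdb by (simp add: CRHW_def)
    then show "\<beta> \<in> {\<beta>. \<exists>w \<in> CRHW n. word_act w \<alpha> = Some \<beta>}" using wa by blast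
  qed
qed

end
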